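(* Let $0<\varepsilon<2/9$ and let $\mathbf{U}$ be the $7\times 7$ matrix $$\mathbf{U}=\begin{pmatrix} 0 & -1 & \varepsilon & -10 & -\tfrac13+\varepsilon & -\tfrac13+\varepsilon & -\tfrac13+\varepsilon\\ \varepsilon & 0 & -1 & -10 & -\tfrac13+\varepsilon & -\tfrac13+\varepsilon & -\tfrac13+\varepsilon\\ -1 & \varepsilon & 0 & -10 & -\tfrac13+\varepsilon & -\tfrac13+\varepsilon & -\tfrac13+\varepsilon\\ -2 & -2 & 2 & 0 & -\tfrac13 & -\tfrac13 & -\tfrac13\\ -\tfrac13 & -\tfrac13 & -\tfrac13 & 10 & 0 & -1 & \varepsilon\\ -\tfrac13 & -\tfrac13 & -\tfrac13 & 10 & \varepsilon & 0 & -1\\ -\tfrac13 & -\tfrac13 & -\tfrac13 & 10 & -1 & \varepsilon & 0 \end{pmatrix}.$$ Let $\mathbf{x}(\cdot)$ be a solution of the best-reply dynamics in the game with payoff matrix $\mathbf{U}$ such that neither $x_1(0)=x_2(0)=x_3(0)$ nor $x_5(0)=x_6(0)=x_7(0)$. Then there exists a time $T>0$ such that none of the pure strategies $1,2,3$ is a best reply to $\mathbf{x}(T)$, i.e. $(\mathbf{U}\mathbf{x}(T))_i<\max_{1\le j\le 7}(\mathbf{U}\mathbf{x}(T))_j$ for $i=1,2,3$.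
   Context: $S_7=\{\mathbf{x}\in\mathbb{R}_+^7:\sum_i x_i=1\}$. The best-reply dynamics is the differential inclusion $\dot{\mathbf{x}}\in BR(\mathbf{x})-\mathbf{x}$, $BR(\mathbf{x})=\{\mathbf{y}\in S_7:\mathbf{y}\cdot\mathbf{U}\mathbf{x}=\max_{\mathbf{z}\in S_7}\mathbf{z}\cdot\mathbf{U}\mathbf{x}\}$; a solution is an absolutely continuous $\mathbf{x}:\mathbb{R}_+\to S_7$ satisfying it for almost every $t$. *)

theory Defs
  imports "HOL-Analysis.Analysis" "HOL-Library.Numeral_Type"
begin

text \<open>Strategies 1..7 are the components 1,...,7 of a vector of type real^7
  (the index numeral 7 of the type 7 is the seventh coordinate).\<close>

definition simplex7 :: "(real^7) set" where
  "simplex7 = {x. (\<forall>i. 0 \<le> x $ i) \<and> (\<Sum>i\<in>UNIV. x $ i) = 1}"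

definition BR :: "real^7^7 \<Rightarrow> real^7 \<Rightarrow> (real^7) set" where
  "BR U x = {y \<in> simplex7. \<forall>z \<in> simplex7. z \<bullet> (U *v x) \<le> y \<bullet> (U *v x)}"

definition abs_cont_on :: "(real \<Rightarrow> 'a::real_normed_vector) \<Rightarrow> real \<Rightarrow> real \<Rightarrow> bool" where
  "abs_cont_on f a b \<longleftrightarrow>
    (\<forall>e>0. \<exists>d>0. \<forall>(n::nat) (l::nat \<Rightarrow> real) (r::nat \<Rightarrow> real).
       (\<forall>k<n. a \<le> l k \<and> l k \<le> r k \<and> r k \<le> b) \<and>
       (\<forall>k<n. \<forall>j<n. k \<noteq> j \<longrightarrow> r k \<le> l j \<or> r j \<le> l k) \<and>
       (\<Sum>k<n. r k - l k) < d
       \<longrightarrow> (\<Sum>k<n. norm (f (r k) - f (l k))) < e)"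

definition BR_solution :: "real^7^7 \<Rightarrow> (real \<Rightarrow> real^7) \<Rightarrow> bool" where
  "BR_solution U x \<longleftrightarrow>
     (\<forall>t\<ge>0. x t \<in> simplex7) \<and>
     (\<forall>T\<ge>0. abs_cont_on x 0 T) \<and>
     (AE t in lborel. t \<ge> 0 \<longrightarrow>
        (\<exists>v. (x has_vector_derivative v) (at t within {0..}) \<and> v \<in> (\<lambda>y. y - x t) ` BR U (x t)))"

definition Umat :: "real \<Rightarrow> real^7^7" where
  "Umat e = vector [
     vector [0, -1, e, -10, -1/3+e, -1/3+e, -1/3+e],
     vector [e, 0, -1, -10, -1/3+e, -1/3+e, -1/3+e],
     vector [-1, e, 0, -10, -1/3+e, -1/3+e, -1/3+e],
     vector [-2, -2, 2, 0, -1/3, -1/3, -1/3],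
     vector [-1/3, -1/3, -1/3, 10, 0, -1, e],
     vector [-1/3, -1/3, -1/3, 10, e, 0, -1],
     vector [-1/3, -1/3, -1/3, 10, -1, e, 0]]"

end

theory Submission
  imports Defs
begin

lemma UNIV7: "(UNIV::7 set) = set [1,2,3,4,5,6,7]"
proof -
  have "\<And>i::7. i \<in> {1,2,3,4,5,6,7}"
  proof -
    fix i :: 7
    show "i \<in> {1,2,3,4,5,6,7}"
    proof (cases i rule: bit1_cases)
      case (of_int z)
      then have "z < 7" by simp
      with of_int have "z = 0 \<or> z = 1 \<or> z = 2 \<or> z = 3 \<or> z = 4 \<or> z = 5 \<or> z = 6" by arith
      then show ?thesis using of_int by auto
    qed
  qed
  thus ?thesis by auto
qed
lemma sum7: "(\<Sum>i\<in>(UNIV::7 set). f i) = f 1 + f 2 + f 3 + f 4 + f 5 + f 6 + f 7"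
proof -
  have d: "distinct [1,2,3,4,5,6,7::7]" by simp
  have "(\<Sum>i\<in>(UNIV::7 set). f i) = sum_list (map f [1,2,3,4,5,6,7])"
    unfolding UNIV7 by (rule sum.distinct_set_conv_list[OF d])
  thus ?thesis by (simp add: add.assoc)
qed
lemma vec7:
  "vector [a1,a2,a3,a4,a5,a6,a7] $ (1::7) = (a1::'a::zero)"
  "vector [a1,a2,a3,a4,a5,a6,a7] $ (2::7) = (a2::'a::zero)"
  "vector [a1,a2,a3,a4,a5,a6,a7] $ (3::7) = (a3::'a::zero)"
  "vector [a1,a2,a3,a4,a5,a6,a7] $ (4::7) = (a4::'a::zero)"
  "vector [a1,a2,a3,a4,a5,a6,a7] $ (5::7) = (a5::'a::zero)"
  "vector [a1,a2,a3,a4,a5,a6,a7] $ (6::7) = (a6::'a::zero)"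
  "vector [a1,a2,a3,a4,a5,a6,a7] $ (7::7) = (a7::'a::zero)"
  unfolding vector_def by simp_all
lemma Urows:
  "Umat e $ 1 = vector [0, -1, e, -10, -1/3+e, -1/3+e, -1/3+e]"
  "Umat e $ 2 = vector [e, 0, -1, -10, -1/3+e, -1/3+e, -1/3+e]"
  "Umat e $ 3 = vector [-1, e, 0, -10, -1/3+e, -1/3+e, -1/3+e]"
  "Umat e $ 4 = vector [-2, -2, 2, 0, -1/3, -1/3, -1/3]"
  "Umat e $ 5 = vector [-1/3, -1/3, -1/3, 10, 0, -1, e]"
  "Umat e $ 6 = vector [-1/3, -1/3, -1/3, 10, e, 0, -1]"
  "Umat e $ 7 = vector [-1/3, -1/3, -1/3, 10, -1, e, 0]"
  unfolding Umat_def by (simp only: vec7)+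
lemma mv7: "((M::real^7^7) *v v) $ i = M$i$1 * v$1 + M$i$2 * v$2 + M$i$3 * v$3 + M$i$4 * v$4 + M$i$5 * v$5 + M$i$6 * v$6 + M$i$7 * v$7"
  by (simp only: matrix_vector_mult_def vec_lambda_beta sum7)
lemma Ux:
  "(Umat e *v v) $ 1 = - v$2 + e * v$3 - 10 * v$4 + (e - 1/3) * (v$5 + v$6 + v$7)"
  "(Umat e *v v) $ 2 = e * v$1 - v$3 - 10 * v$4 + (e - 1/3) * (v$5 + v$6 + v$7)"
  "(Umat e *v v) $ 3 = - v$1 + e * v$2 - 10 * v$4 + (e - 1/3) * (v$5 + v$6 + v$7)"
  "(Umat e *v v) $ 4 = -2 * v$1 - 2 * v$2 + 2 * v$3 - (v$5 + v$6 + v$7)/3"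
  "(Umat e *v v) $ 5 = - (v$1 + v$2 + v$3)/3 + 10 * v$4 - v$6 + e * v$7"
  "(Umat e *v v) $ 6 = - (v$1 + v$2 + v$3)/3 + 10 * v$4 + e * v$5 - v$7"
  "(Umat e *v v) $ 7 = - (v$1 + v$2 + v$3)/3 + 10 * v$4 - v$5 + e * v$6"
  by (simp only: mv7 Urows vec7; simp add: field_simps)+

lemma acE:
  assumes "abs_cont_on h a b" "e > 0"
  obtains d where "d > 0" "\<And>(n::nat) (l::nat\<Rightarrow>real) (r::nat\<Rightarrow>real). (\<forall>k<n. a \<le> l k \<and> l k \<le> r k \<and> r k \<le> b) \<Longrightarrow>
       (\<forall>k<n. \<forall>j<n. k \<noteq> j \<longrightarrow> r k \<le> l j \<or> r j \<le> l k) \<Longrightarrow> (\<Sum>k<n. r k - l k) < d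
       \<Longrightarrow> (\<Sum>k<n. norm (h (r k) - h (l k))) < e"
proof -
  note A = assms(1)[unfolded abs_cont_on_def, THEN spec[where x=e], THEN mp, OF assms(2)]
  show ?thesis
    using A
    apply (elim exE conjE)
    apply (erule that)
    apply (drule spec, drule spec, drule spec, erule mp)
    apply (intro conjI; assumption)
    done
qed

lemma ac_cont:
  fixes h :: "real \<Rightarrow> 'a::real_normed_vector"
  assumes "abs_cont_on h a b"
  shows "continuous_on {a..b} h"
  unfolding continuous_on_iff
proof (intro ballI allI impI)
  fix t e assume t: "t \<in> {a..b}" and e: "(0::real) < e"
  obtain d where d: "d > 0" and H: "\<And>(n::nat) (l::nat\<Rightarrow>real) (r::nat\<Rightarrow>real). (\<forall>k<n. a \<le> l k \<and> l k \<le> r k \<and> r k \<le> b) \<Longrightarrow>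
       (\<forall>k<n. \<forall>j<n. k \<noteq> j \<longrightarrow> r k \<le> l j \<or> r j \<le> l k) \<Longrightarrow> (\<Sum>k<n. r k - l k) < d
       \<Longrightarrow> (\<Sum>k<n. norm (h (r k) - h (l k))) < e"
    by (rule acE[OF assms e]) (rule that)
  show "\<exists>d>0. \<forall>s\<in>{a..b}. dist s t < d \<longrightarrow> dist (h s) (h t) < e"
  proof (intro exI[of _ d] conjI ballI impI d)
    fix s assume s: "s \<in> {a..b}" "dist s t < d"
    have 1: "(\<Sum>k<1::nat. norm (h ((\<lambda>_. max s t) k) - h ((\<lambda>_. min s t) k))) < e"
    proof (rule H)
      show "\<forall>k<1. a \<le> min s t \<and> min s t \<le> max s t \<and> max s t \<le> b" using s t by auto
      show "(\<Sum>k<1::nat. max s t - min s t) < d" using s by (simp add: dist_real_def)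
    qed auto
    have "norm (h (max s t) - h (min s t)) = dist (h s) (h t)"
      by (cases "s \<le> t") (simp_all add: dist_norm norm_minus_commute max_def min_def)
    with 1 show "dist (h s) (h t) < e" by simp
  qed
qed

lemma open_conn_interval:
  fixes C :: "real set"
  assumes "open C" "connected C" "C \<noteq> {}" "bounded C"
  shows "C = {Inf C<..<Sup C}"
proof
  have bb: "bdd_below C" "bdd_above C"
    using assms(4) bounded_imp_bdd_below bounded_imp_bdd_above by auto
  show "C \<subseteq> {Inf C<..<Sup C}"
  proof
    fix t assume t: "t \<in> C"
    obtain r where r: "r > 0" "ball t r \<subseteq> C" using assms(1) t open_contains_ball by blast
    have "t - r/2 \<in> C" "t + r/2 \<in> C" using r by (auto simp: dist_real_def subset_iff)
    then have "Inf C \<le> t - r/2" "t + r/2 \<le> Sup C" using bb by (auto intro: cInf_lower cSup_upper)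
    then show "t \<in> {Inf C<..<Sup C}" using r by auto
  qed
  show "{Inf C<..<Sup C} \<subseteq> C"
  proof
    fix t assume t: "t \<in> {Inf C<..<Sup C}"
    then obtain c1 where c1: "c1 \<in> C" "c1 < t" using cInf_less_iff[OF assms(3) bb(1)] by auto
    obtain c2 where c2: "c2 \<in> C" "t < c2" using t less_cSup_iff[OF assms(3) bb(2)] by auto
    have "is_interval C" using assms(2) is_interval_connected_1 by blast
    then show "t \<in> C" using c1 c2 unfolding is_interval_1 by (meson less_imp_le)
  qed
qed

lemma mid_lt1: "(p::real) < q \<Longrightarrow> (p+q)/2 < q" by (simp add: field_simps)
lemma mid_lt2: "(p::real) < q \<Longrightarrow> p < (p+q)/2" by (simp add: field_simps)

lemma comp_props:
  fixes G' :: "real set"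
  assumes oG': "open G'" and sab0: "G' \<subseteq> {a<..<b}" and C: "C \<in> components G'"
  shows "open C \<and> C \<noteq> {} \<and> C \<subseteq> G' \<and> C = {Inf C<..<Sup C} \<and> a \<le> Inf C \<and> Inf C < Sup C \<and> Sup C \<le> b"
proof -
  have bG': "bounded G'" by (rule bounded_subset[OF _ sab0]) (metis box_real(1) bounded_box)
  have o: "open C" using open_components[OF oG'] C by simp
  have ne: "C \<noteq> {}" using C in_components_nonempty by auto
  have ss: "C \<subseteq> G'" using C in_components_subset by auto
  have cn: "connected C" using C in_components_connected by auto
  have bd: "bounded C" using bounded_subset[OF bG' ss] .
  have eq: "C = {Inf C<..<Sup C}" by (rule open_conn_interval[OF o cn ne bd])
  have lt: "Inf C < Sup C"
  proof (rule ccontr)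
    assume "\<not> Inf C < Sup C"
    then have "{Inf C<..<Sup C} = {}" by auto
    with eq have "C = {}" by (rule trans)
    then show False using ne by simp
  qed
  have sab: "C \<subseteq> {a<..<b}" using ss sab0 by auto
  have "a \<le> Inf C"
  proof (rule ccontr)
    assume "\<not> a \<le> Inf C"
    then have m: "Inf C < min a (Sup C)" using lt by auto
    then have "(Inf C + min a (Sup C))/2 \<in> C" by (subst eq) (auto intro: mid_lt2 mid_lt1 less_le_trans[OF mid_lt1])
    moreover have "(Inf C + min a (Sup C))/2 < min a (Sup C)" using m by (rule mid_lt1)
    moreover have "min a (Sup C) \<le> a" by simp
    ultimately show False using sab by force
  qed
  moreover have "Sup C \<le> b"
  proof (rule ccontr)
    assume "\<not> Sup C \<le> b"
    then have m: "max b (Inf C) < Sup C" using lt by auto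
    then have "(max b (Inf C) + Sup C)/2 \<in> C" by (subst eq) (auto intro: mid_lt2 mid_lt1 le_less_trans[OF _ mid_lt2])
    moreover have "max b (Inf C) < (max b (Inf C) + Sup C)/2" using m by (rule mid_lt2)
    moreover have "b \<le> max b (Inf C)" by simp
    ultimately show False using sab by force
  qed
  ultimately show ?thesis using o ne ss eq lt by (intro conjI) assumption+
qed


lemma meas_Icc: "l \<le> u \<Longrightarrow> measure lebesgue {l..u::real} = u - l"
  by (simp add: measure_completion)
lemma meas_Ioo: "l \<le> u \<Longrightarrow> measure lebesgue {l<..<u::real} = u - l"
  by (simp add: measure_completion)

lemma interval_disj:
  fixes l1 u1 l2 u2 :: real
  assumes "l1 < u1" "l2 < u2" "{l1<..<u1} \<inter> {l2<..<u2} = {}"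
  shows "u1 \<le> l2 \<or> u2 \<le> l1"
proof (rule ccontr)
  assume "\<not> (u1 \<le> l2 \<or> u2 \<le> l1)"
  then have m: "max l1 l2 < min u1 u2" using assms by auto
  have "max l1 l2 < (max l1 l2 + min u1 u2)/2" "(max l1 l2 + min u1 u2)/2 < min u1 u2"
    using mid_lt1[OF m] mid_lt2[OF m] by auto
  then have "(max l1 l2 + min u1 u2)/2 \<in> {l1<..<u1} \<inter> {l2<..<u2}" by auto
  then show False using assms(3) by blast
qed

lemma lusin:
  fixes h :: "real \<Rightarrow> real"
  assumes ac: "abs_cont_on h a b" and N: "negligible N" and sub: "N \<subseteq> {a<..<b}"
  shows "negligible (h ` N)"
  unfolding negligible_outer_le
proof (intro allI impI)
  fix \<eta> :: real assume \<eta>: "\<eta> > 0"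
  obtain \<delta> where \<delta>: "\<delta> > 0" and H: "\<And>(n::nat) (l::nat\<Rightarrow>real) (r::nat\<Rightarrow>real). (\<forall>k<n. a \<le> l k \<and> l k \<le> r k \<and> r k \<le> b) \<Longrightarrow>
       (\<forall>k<n. \<forall>j<n. k \<noteq> j \<longrightarrow> r k \<le> l j \<or> r j \<le> l k) \<Longrightarrow> (\<Sum>k<n. r k - l k) < \<delta>
       \<Longrightarrow> (\<Sum>k<n. norm (h (r k) - h (l k))) < \<eta>"
    by (rule acE[OF ac \<eta>]) (rule that)
  have hc: "continuous_on {a..b} h" using ac_cont[OF ac] .
  have "N \<in> sets lebesgue" using N negligible_imp_sets by blast
  then obtain G where G: "open G" "N \<subseteq> G" "(G - N) \<in> lmeasurable" "emeasure lebesgue (G - N) < ennreal \<delta>"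
    using sets_lebesgue_outer_open[of N \<delta>] \<delta> by blast
  define G' where "G' = G \<inter> {a<..<b}"
  have oG': "open G'" using G(1) by (simp add: G'_def open_Int)
  have NG': "N \<subseteq> G'" using G(2) sub by (auto simp: G'_def)
  have sG': "G' \<subseteq> {a<..<b}" by (auto simp: G'_def)
  have bG': "bounded G'" by (rule bounded_subset[OF _ sG']) (metis box_real(1) bounded_box)
  have G'm: "G' \<in> lmeasurable" using lmeasurable_open[OF bG' oG'] .
  have mGN: "measure lebesgue (G - N) < \<delta>"
    using G(3,4) \<delta> by (simp add: emeasure_eq_measure2 ennreal_less_iff)
  have mG': "measure lebesgue G' < \<delta>"
  proof -
    have "G' \<subseteq> (G - N) \<union> N" by (auto simp: G'_def)
    moreover have "(G - N) \<union> N \<in> lmeasurable" using G(3) N negligible_imp_measurable by blast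
    ultimately have "measure lebesgue G' \<le> measure lebesgue ((G - N) \<union> N)"
      using G'm by (intro measure_mono_fmeasurable) auto
    also have "\<dots> \<le> measure lebesgue (G - N) + measure lebesgue N"
      using G(3) N negligible_imp_measurable by (intro measure_Un_le) auto
    also have "\<dots> = measure lebesgue (G - N)" using N negligible_imp_measure0 by simp
    finally show ?thesis using mGN by simp
  qed
  define \<C> where "\<C> = components G'"
  have CP: "open C \<and> C \<noteq> {} \<and> C \<subseteq> G' \<and> C = {Inf C<..<Sup C} \<and> a \<le> Inf C \<and> Inf C < Sup C \<and> Sup C \<le> b"
    if "C \<in> \<C>" for C using comp_props[OF oG' sG'] that by (simp add: \<C>_def)
  have cnt: "countable \<C>"
  proof (rule countable_disjoint_open_subsets)
    show "open C" if "C \<in> \<C>" for C using CP[OF that] by blast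
    show "pairwise disjnt \<C>"
      unfolding pairwise_def disjnt_def \<C>_def using components_nonoverlap by blast
  qed
  have Cdisj: "Sup C \<le> Inf D \<or> Sup D \<le> Inf C" if "C \<in> \<C>" "D \<in> \<C>" "C \<noteq> D" for C D
  proof -
    have "C \<inter> D = {}" using that components_nonoverlap unfolding \<C>_def by blast
    moreover have "C = {Inf C<..<Sup C}" "D = {Inf D<..<Sup D}" using CP that by blast+
    ultimately have "{Inf C<..<Sup C} \<inter> {Inf D<..<Sup D} = {}" by simp
    then show ?thesis using interval_disj CP that by blast
  qed
  define p where "p C = (SOME t. t \<in> {Inf C..Sup C} \<and> (\<forall>s\<in>{Inf C..Sup C}. h t \<le> h s))" for C
  define q where "q C = (SOME t. t \<in> {Inf C..Sup C} \<and> (\<forall>s\<in>{Inf C..Sup C}. h s \<le> h t))" for C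
  have pq: "p C \<in> {Inf C..Sup C} \<and> q C \<in> {Inf C..Sup C} \<and> (\<forall>s\<in>{Inf C..Sup C}. h (p C) \<le> h s \<and> h s \<le> h (q C))"
    if C: "C \<in> \<C>" for C
  proof -
    have sub: "{Inf C..Sup C} \<subseteq> {a..b}" using CP[OF C] by auto
    have hcC: "continuous_on {Inf C..Sup C} h" using continuous_on_subset[OF hc sub] .
    have ne: "{Inf C..Sup C} \<noteq> {}" using CP[OF C] by auto
    have e1: "\<exists>t. t \<in> {Inf C..Sup C} \<and> (\<forall>s\<in>{Inf C..Sup C}. h t \<le> h s)"
      using continuous_attains_inf[OF compact_Icc ne hcC] by blast
    have e2: "\<exists>t. t \<in> {Inf C..Sup C} \<and> (\<forall>s\<in>{Inf C..Sup C}. h s \<le> h t)"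
      using continuous_attains_sup[OF compact_Icc ne hcC] by blast
    show ?thesis using someI_ex[OF e1] someI_ex[OF e2] unfolding p_def q_def by blast
  qed
  define T where "T C = {h (p C)..h (q C)}" for C
  have cover: "h ` N \<subseteq> (\<Union>C\<in>\<C>. T C)"
  proof
    fix y assume "y \<in> h ` N"
    then obtain t where t: "t \<in> N" "y = h t" by blast
    then have "t \<in> \<Union>\<C>" using NG' unfolding \<C>_def Union_components by blast
    then obtain C where C: "C \<in> \<C>" "t \<in> C" by blast
    have eq: "C = {Inf C<..<Sup C}" using CP[OF C(1)] by blast
    have "t \<in> {Inf C<..<Sup C}" using C(2) by (subst (asm) eq)
    then have "t \<in> {Inf C..Sup C}" by auto
    then show "y \<in> (\<Union>C\<in>\<C>. T C)" using pq[OF C(1)] C(1) t(2) unfolding T_def by auto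
  qed
  have bound: "measure lebesgue (\<Union>C\<in>F. T C) \<le> \<eta>" if F: "F \<subseteq> \<C>" "finite F" for F
  proof -
    have hpq: "h (p C) \<le> h (q C)" if "C \<in> \<C>" for C using pq[OF that] by auto
    have "measure lebesgue (\<Union>C\<in>F. T C) \<le> (\<Sum>C\<in>F. measure lebesgue (T C))"
      using F(2) by (intro measure_UNION_le) (auto simp: T_def)
    also have "\<dots> = (\<Sum>C\<in>F. h (q C) - h (p C))"
      using F(1) hpq by (intro sum.cong) (auto simp: T_def meas_Icc)
    also have "\<dots> < \<eta>"
    proof -
      obtain f where f: "bij_betw f {0..<card F} F" using ex_bij_betw_nat_finite[OF F(2)] by blast
      define n where "n = card F"
      define l where "l k = min (p (f k)) (q (f k))" for k
      define r where "r k = max (p (f k)) (q (f k))" for k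
      have fF: "f k \<in> \<C>" if "k < n" for k using f F(1) that unfolding n_def bij_betw_def by auto
      have c1: "\<forall>k<n. a \<le> l k \<and> l k \<le> r k \<and> r k \<le> b"
      proof (intro allI impI)
        fix k assume k: "k < n"
        have "a \<le> Inf (f k)" "Sup (f k) \<le> b" using CP[OF fF[OF k]] by auto
        then show "a \<le> l k \<and> l k \<le> r k \<and> r k \<le> b"
          using pq[OF fF[OF k]] unfolding l_def r_def by auto
      qed
      have c2: "\<forall>k<n. \<forall>j<n. k \<noteq> j \<longrightarrow> r k \<le> l j \<or> r j \<le> l k"
      proof (intro allI impI)
        fix k j assume kj: "k < n" "j < n" "k \<noteq> j"
        then have "f k \<noteq> f j" using f unfolding bij_betw_def inj_on_def n_def by auto
        then have "Sup (f k) \<le> Inf (f j) \<or> Sup (f j) \<le> Inf (f k)" using Cdisj fF kj by blast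
        then show "r k \<le> l j \<or> r j \<le> l k"
          using pq[OF fF[OF kj(1)]] pq[OF fF[OF kj(2)]] unfolding l_def r_def by auto
      qed
      have c3: "(\<Sum>k<n. r k - l k) < \<delta>"
      proof -
        have "(\<Sum>k<n. r k - l k) \<le> (\<Sum>k<n. Sup (f k) - Inf (f k))"
        proof (rule sum_mono)
          fix k assume "k \<in> {..<n}"
          then have "f k \<in> \<C>" using fF by auto
          from pq[OF this] show "r k - l k \<le> Sup (f k) - Inf (f k)" unfolding l_def r_def by auto
        qed
        also have "\<dots> = (\<Sum>C\<in>F. Sup C - Inf C)"
          using sum.reindex_bij_betw[OF f, of "\<lambda>C. Sup C - Inf C"] by (simp add: n_def lessThan_atLeast0)
        also have "\<dots> = (\<Sum>C\<in>F. measure lebesgue C)"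
        proof (rule sum.cong[OF refl])
          fix C assume "C \<in> F"
          then have CC: "C \<in> \<C>" using F(1) by auto
          have eq: "C = {Inf C<..<Sup C}" using CP[OF CC] by blast
          have lt: "Inf C < Sup C" using CP[OF CC] by blast
          have "measure lebesgue {Inf C<..<Sup C} = Sup C - Inf C" using lt by (intro meas_Ioo) simp
          then show "Sup C - Inf C = measure lebesgue C" by (subst (2) eq) simp
        qed
        also have "\<dots> = measure lebesgue (\<Union>C\<in>F. C)"
        proof (rule measure_finite_Union[symmetric, OF F(2)])
          show "(\<lambda>C. C) ` F \<subseteq> sets lebesgue" using F(1) CP
            by (auto intro: borel_open)
          show "disjoint_family_on (\<lambda>C. C) F"
            unfolding disjoint_family_on_def using F(1) components_nonoverlap unfolding \<C>_def by blast
          show "emeasure lebesgue C \<noteq> \<infinity>" if "C \<in> F" for C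
          proof -
            have "C \<subseteq> G'" using CP F(1) that by blast
            then have "C \<in> lmeasurable" using CP F(1) that bounded_subset[OF bG'] lmeasurable_open by blast
            then show ?thesis using fmeasurableD2 by (metis infinity_ennreal_def)
          qed
        qed
        also have "\<dots> \<le> measure lebesgue G'"
        proof (rule measure_mono_fmeasurable)
          show "(\<Union>C\<in>F. C) \<subseteq> G'" using CP F(1) by blast
          have o: "open (\<Union>C\<in>F. C)" using CP F(1) by blast
          have "(\<Union>C\<in>F. C) \<subseteq> G'" using CP F(1) by blast
          then have "(\<Union>C\<in>F. C) \<in> lmeasurable" using o bounded_subset[OF bG'] lmeasurable_open by blast
          then show "(\<Union>C\<in>F. C) \<in> sets lebesgue" by blast
        qed (rule G'm)
        finally show ?thesis using mG' by simp
      qed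
      have "(\<Sum>k<n. norm (h (r k) - h (l k))) < \<eta>" by (rule H[OF c1 c2 c3])
      moreover have "(\<Sum>k<n. norm (h (r k) - h (l k))) = (\<Sum>k<n. h (q (f k)) - h (p (f k)))"
      proof (rule sum.cong[OF refl])
        fix k assume "k \<in> {..<n}"
        then have "h (p (f k)) \<le> h (q (f k))" using hpq fF by auto
        then show "norm (h (r k) - h (l k)) = h (q (f k)) - h (p (f k))"
          unfolding l_def r_def by (cases "p (f k) \<le> q (f k)") (auto simp: max_def min_def)
      qed
      moreover have "(\<Sum>k<n. h (q (f k)) - h (p (f k))) = (\<Sum>C\<in>F. h (q C) - h (p C))"
        using sum.reindex_bij_betw[OF f, of "\<lambda>C. h (q C) - h (p C)"] by (simp add: n_def lessThan_atLeast0)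
      ultimately show ?thesis by simp
    qed
    finally show ?thesis by simp
  qed
  have Tm: "T C \<in> fmeasurable lebesgue" for C unfolding T_def by simp
  show "\<exists>T. h ` N \<subseteq> T \<and> T \<in> lmeasurable \<and> measure lebesgue T \<le> \<eta>"
    using cover fmeasurable_UN_bound[OF cnt Tm bound] measure_UN_bound[OF cnt Tm bound] by blast
qed


lemma ac_lip_comp:
  fixes x :: "real \<Rightarrow> 'a::real_normed_vector" and g :: "real \<Rightarrow> real"
  assumes ac: "abs_cont_on x a b" and L: "L \<ge> 0"
    and lip: "\<And>s t. s \<in> {a..b} \<Longrightarrow> t \<in> {a..b} \<Longrightarrow> \<bar>g s - g t\<bar> \<le> L * (\<bar>s - t\<bar> + norm (x s - x t))"
  shows "abs_cont_on g a b"
  unfolding abs_cont_on_def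
proof (intro allI impI)
  fix e :: real assume e: "e > 0"
  define e' where "e' = e / (2 * (L + 1))"
  have e': "e' > 0" using e L by (simp add: e'_def)
  obtain d where d: "d > 0" and H: "\<And>(n::nat) (l::nat\<Rightarrow>real) (r::nat\<Rightarrow>real). (\<forall>k<n. a \<le> l k \<and> l k \<le> r k \<and> r k \<le> b) \<Longrightarrow>
       (\<forall>k<n. \<forall>j<n. k \<noteq> j \<longrightarrow> r k \<le> l j \<or> r j \<le> l k) \<Longrightarrow> (\<Sum>k<n. r k - l k) < d
       \<Longrightarrow> (\<Sum>k<n. norm (x (r k) - x (l k))) < e'"
    by (rule acE[OF ac e']) (rule that)
  show "\<exists>d>0. \<forall>(n::nat) (l::nat\<Rightarrow>real) (r::nat\<Rightarrow>real). (\<forall>k<n. a \<le> l k \<and> l k \<le> r k \<and> r k \<le> b) \<and>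
       (\<forall>k<n. \<forall>j<n. k \<noteq> j \<longrightarrow> r k \<le> l j \<or> r j \<le> l k) \<and> (\<Sum>k<n. r k - l k) < d
       \<longrightarrow> (\<Sum>k<n. norm (g (r k) - g (l k))) < e"
  proof (intro exI[of _ "min d e'"] conjI allI impI)
    show "min d e' > 0" using d e' by simp
    fix n :: nat and l r :: "nat \<Rightarrow> real"
    assume A: "(\<forall>k<n. a \<le> l k \<and> l k \<le> r k \<and> r k \<le> b) \<and>
       (\<forall>k<n. \<forall>j<n. k \<noteq> j \<longrightarrow> r k \<le> l j \<or> r j \<le> l k) \<and> (\<Sum>k<n. r k - l k) < min d e'"
    have s1: "(\<Sum>k<n. norm (x (r k) - x (l k))) < e'" using A by (intro H) auto
    have s2: "(\<Sum>k<n. r k - l k) < e'" using A by auto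
    have "(\<Sum>k<n. norm (g (r k) - g (l k))) \<le> (\<Sum>k<n. L * (\<bar>r k - l k\<bar> + norm (x (r k) - x (l k))))"
    proof (rule sum_mono)
      fix k assume "k \<in> {..<n}"
      then have "r k \<in> {a..b}" "l k \<in> {a..b}" using A by auto
      then show "norm (g (r k) - g (l k)) \<le> L * (\<bar>r k - l k\<bar> + norm (x (r k) - x (l k)))"
        using lip[of "r k" "l k"] by simp
    qed
    also have "\<dots> = L * ((\<Sum>k<n. r k - l k) + (\<Sum>k<n. norm (x (r k) - x (l k))))"
    proof -
      have "(\<Sum>k<n. \<bar>r k - l k\<bar>) = (\<Sum>k<n. r k - l k)" using A by (intro sum.cong) auto
      moreover have "(\<Sum>k<n. L * (\<bar>r k - l k\<bar> + norm (x (r k) - x (l k))))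
          = L * ((\<Sum>k<n. \<bar>r k - l k\<bar>) + (\<Sum>k<n. norm (x (r k) - x (l k))))"
        by (simp add: sum.distrib distrib_left sum_distrib_left)
      ultimately show ?thesis by simp
    qed
    also have "\<dots> \<le> L * (2 * e')" using s1 s2 L by (intro mult_left_mono) auto
    also have "\<dots> < e"
    proof -
      have "L * (2 * e') = e * (L / (L + 1))" using L by (simp add: e'_def field_simps)
      also have "\<dots> < e * 1" using e L by (intro mult_strict_left_mono) auto
      finally show ?thesis by simp
    qed
    finally show "(\<Sum>k<n. norm (g (r k) - g (l k))) < e" .
  qed
qed

definition rdini :: "(real \<Rightarrow> real) \<Rightarrow> real \<Rightarrow> real \<Rightarrow> bool" where
  "rdini g t d \<longleftrightarrow> (\<forall>\<epsilon>>0. \<exists>\<delta>>0. \<forall>s. t < s \<and> s < t + \<delta> \<longrightarrow> g t + (d - \<epsilon>) * (s - t) \<le> g s)"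

lemma mono_ac:
  fixes g :: "real \<Rightarrow> real"
  assumes ac: "abs_cont_on g a b" and ab: "a \<le> b" and N: "negligible N"
    and D: "\<And>t. t \<in> {a<..<b} \<Longrightarrow> t \<notin> N \<Longrightarrow> rdini g t 0"
  shows "g a \<le> g b"
proof (rule ccontr)
  assume "\<not> g a \<le> g b"
  then have lt: "g b < g a" by simp
  then have ab': "a < b" using ab by (cases "a = b") auto
  define \<epsilon> where "\<epsilon> = (g a - g b) / (2 * (b - a))"
  have \<epsilon>: "\<epsilon> > 0" using lt ab' by (simp add: \<epsilon>_def)
  define k where "k t = g t + \<epsilon> * (t - a)" for t
  have "\<epsilon> * (b - a) = (g a - g b)/2" using ab' by (simp add: \<epsilon>_def field_simps)
  then have kb: "k b < k a" using lt by (simp add: k_def)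
  have kac: "abs_cont_on k a b"
  proof (rule ac_lip_comp[OF ac, of "max 1 \<epsilon>"])
    fix s t assume "s \<in> {a..b}" "t \<in> {a..b}"
    have "k s - k t = (g s - g t) + \<epsilon> * (s - t)" by (simp add: k_def algebra_simps)
    then have "\<bar>k s - k t\<bar> \<le> \<bar>g s - g t\<bar> + \<bar>\<epsilon> * (s - t)\<bar>" by (metis abs_triangle_ineq)
    moreover have "\<bar>\<epsilon> * (s - t)\<bar> = \<epsilon> * \<bar>s - t\<bar>" using \<epsilon> by (simp add: abs_mult)
    ultimately have "\<bar>k s - k t\<bar> \<le> \<bar>g s - g t\<bar> + \<epsilon> * \<bar>s - t\<bar>" by simp
    also have "\<dots> \<le> max 1 \<epsilon> * (\<bar>s - t\<bar> + norm (g s - g t))"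
    proof -
      have "\<bar>g s - g t\<bar> \<le> max 1 \<epsilon> * \<bar>g s - g t\<bar>" by (simp add: mult_le_cancel_right1 le_max_iff_disj)
      moreover have "\<epsilon> * \<bar>s - t\<bar> \<le> max 1 \<epsilon> * \<bar>s - t\<bar>" by (intro mult_right_mono) auto
      ultimately show ?thesis by (simp add: distrib_left)
    qed
    finally show "\<bar>k s - k t\<bar> \<le> max 1 \<epsilon> * (\<bar>s - t\<bar> + norm (g s - g t))" .
  qed simp
  have kc: "continuous_on {a..b} k" using ac_cont[OF kac] .
  have cov: "{k b<..<k a} \<subseteq> k ` (N \<inter> {a<..<b})"
  proof
    fix c assume c: "c \<in> {k b<..<k a}"
    define S where "S = {t \<in> {a..b}. c \<le> k t}"
    have Sne: "S \<noteq> {}" using c ab by (auto simp: S_def)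
    have Sbd: "bdd_above S" by (rule bdd_aboveI[of _ b]) (auto simp: S_def)
    have Scl: "closed S" unfolding S_def
      by (rule continuous_on_closed_Collect_le[OF continuous_on_const kc closed_atLeastAtMost])
    define t0 where "t0 = Sup S"
    have t0S: "t0 \<in> S" using closed_contains_Sup[OF Sne Sbd Scl] by (simp add: t0_def)
    have after: "k t < c" if "t0 < t" "t \<le> b" for t
    proof (rule ccontr)
      assume "\<not> k t < c"
      then have "t \<in> S" using that t0S by (auto simp: S_def)
      then have "t \<le> t0" using Sbd by (simp add: t0_def cSup_upper)
      then show False using that by simp
    qed
    have t0b: "t0 < b"
    proof -
      have "t0 \<le> b" using t0S by (auto simp: S_def)
      moreover have "t0 \<noteq> b" using t0S c by (auto simp: S_def)
      ultimately show ?thesis by simp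
    qed
    have kt0: "k t0 = c"
    proof (rule ccontr)
      assume "k t0 \<noteq> c"
      then have gt: "k t0 > c" using t0S by (auto simp: S_def)
      have t0ab: "t0 \<in> {a..b}" using t0S by (simp add: S_def)
      have "\<exists>d>0. \<forall>s\<in>{a..b}. dist s t0 < d \<longrightarrow> dist (k s) (k t0) < k t0 - c"
        using kc[unfolded continuous_on_iff, rule_format, OF t0ab, of "k t0 - c"] gt by simp
      then obtain d where d: "d > 0" "\<And>s. s \<in> {a..b} \<Longrightarrow> dist s t0 < d \<Longrightarrow> dist (k s) (k t0) < k t0 - c"
        by blast
      define m where "m = min d (b - t0)"
      have m: "0 < m" "m \<le> d" "m \<le> b - t0" using d t0b by (auto simp: m_def)
      define s where "s = t0 + m / 2"
      have s: "t0 < s" "s \<le> b" "dist s t0 < d" using m by (auto simp: s_def dist_real_def field_simps)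
      have "s \<in> {a..b}" using s t0S by (auto simp: S_def)
      then have "dist (k s) (k t0) < k t0 - c" using d s by blast
      then have "k s > c" by (simp add: dist_real_def)
      then show False using after s by fastforce
    qed
    have t0a: "a < t0"
    proof -
      have "a \<le> t0" using t0S by (auto simp: S_def)
      moreover have "t0 \<noteq> a" using kt0 c by auto
      ultimately show ?thesis by simp
    qed
    have "t0 \<in> N"
    proof (rule ccontr)
      assume "t0 \<notin> N"
      then have "rdini g t0 0" using D t0a t0b by simp
      then have "\<exists>\<delta>>0. \<forall>s. t0 < s \<and> s < t0 + \<delta> \<longrightarrow> g t0 + (0 - \<epsilon>/2) * (s - t0) \<le> g s"
        unfolding rdini_def using half_gt_zero[OF \<epsilon>] by blast
      then obtain \<delta> where \<delta>: "\<delta> > 0" "\<And>s. t0 < s \<Longrightarrow> s < t0 + \<delta> \<Longrightarrow> g t0 + (0 - \<epsilon>/2) * (s - t0) \<le> g s"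
        by blast
      define m where "m = min \<delta> (b - t0)"
      have m: "0 < m" "m \<le> \<delta>" "m \<le> b - t0" using \<delta> t0b by (auto simp: m_def)
      define s where "s = t0 + m / 2"
      have s: "t0 < s" "s \<le> b" "s < t0 + \<delta>" using m by (auto simp: s_def field_simps)
      define X where "X = \<epsilon> * (s - t0)"
      have "g t0 - X/2 \<le> g s" using \<delta>(2)[OF s(1) s(3)] by (simp add: X_def)
      moreover have "k s - k t0 = g s - g t0 + X" by (simp add: k_def X_def algebra_simps)
      ultimately have "k t0 + X/2 \<le> k s" by linarith
      moreover have "X/2 > 0" using \<epsilon> s by (simp add: X_def)
      ultimately have "k s > c" using kt0 by simp
      then show False using after s by fastforce
    qed
    then show "c \<in> k ` (N \<inter> {a<..<b})" using kt0 t0a t0b by force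
  qed
  have "negligible (k ` (N \<inter> {a<..<b}))"
    by (rule lusin[OF kac]) (use N negligible_Int in auto)
  then have "negligible {k b<..<k a}" using cov negligible_subset by blast
  then show False using kb negligible_interval(2)[of "k b" "k a"] by simp
qed

lemma exp_lip:
  fixes s t T :: real
  assumes "s \<in> {0..T}" "t \<in> {0..T}"
  shows "\<bar>exp s - exp t\<bar> \<le> exp T * \<bar>s - t\<bar>"
proof -
  have key: "exp q - exp p \<le> exp T * (q - p)" if "p \<le> q" "q \<le> T" for p q :: real
  proof -
    have "1 + (p - q) \<le> exp (p - q)" by (rule exp_ge_add_one_self)
    then have "exp q * (1 + (p - q)) \<le> exp q * exp (p - q)" by (intro mult_left_mono) auto
    also have "exp q * exp (p - q) = exp p" by (simp add: exp_add[symmetric])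
    finally have "exp q - exp p \<le> exp q * (q - p)" by (simp add: algebra_simps)
    also have "\<dots> \<le> exp T * (q - p)" using that by (intro mult_right_mono) auto
    finally show ?thesis .
  qed
  show ?thesis
  proof (cases "s \<le> t")
    case True
    then show ?thesis using key[of s t] assms by (auto simp: abs_if)
  next
    case False
    then show ?thesis using key[of t s] assms by (auto simp: abs_if)
  qed
qed

lemma deriv_rdini:
  assumes "(g has_real_derivative d) (at t within {0..})" "0 \<le> t"
  shows "rdini g t d"
  unfolding rdini_def
proof (intro allI impI)
  fix \<epsilon> :: real assume \<epsilon>: "\<epsilon> > 0"
  have "((\<lambda>s. (g s - g t) / (s - t)) \<longlongrightarrow> d) (at t within {0..})"
    using assms(1) has_field_derivative_iff by blast
  then have "\<forall>e>0. eventually (\<lambda>s. dist ((g s - g t) / (s - t)) d < e) (at t within {0..})"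
    by (simp add: tendsto_iff)
  then have "eventually (\<lambda>s. dist ((g s - g t) / (s - t)) d < \<epsilon>) (at t within {0..})"
    using \<epsilon> by blast
  then obtain \<delta> where \<delta>: "\<delta> > 0" "\<And>s. s \<in> {0..} \<Longrightarrow> s \<noteq> t \<Longrightarrow> dist s t < \<delta> \<Longrightarrow> dist ((g s - g t) / (s - t)) d < \<epsilon>"
    unfolding eventually_at by blast
  show "\<exists>\<delta>>0. \<forall>s. t < s \<and> s < t + \<delta> \<longrightarrow> g t + (d - \<epsilon>) * (s - t) \<le> g s"
  proof (intro exI[of _ \<delta>] conjI allI impI \<delta>(1))
    fix s assume s: "t < s \<and> s < t + \<delta>"
    then have "dist ((g s - g t) / (s - t)) d < \<epsilon>" using assms(2) by (intro \<delta>(2)) (auto simp: dist_real_def)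
    then have "d - \<epsilon> < (g s - g t) / (s - t)" by (simp add: dist_real_def abs_less_iff)
    then have "(d - \<epsilon>) * (s - t) < g s - g t" using s by (simp add: pos_less_divide_eq)
    then show "g t + (d - \<epsilon>) * (s - t) \<le> g s" by simp
  qed
qed

lemma rdini_max:
  assumes "rdini f t d" "\<And>s. f s \<le> F s" "f t = F t"
  shows "rdini F t d"
  unfolding rdini_def
proof (intro allI impI)
  fix \<epsilon> :: real assume "\<epsilon> > 0"
  then obtain \<delta> where \<delta>: "\<delta> > 0" "\<forall>s. t < s \<and> s < t + \<delta> \<longrightarrow> f t + (d - \<epsilon>) * (s - t) \<le> f s"
    using assms(1) unfolding rdini_def by blast
  show "\<exists>\<delta>>0. \<forall>s. t < s \<and> s < t + \<delta> \<longrightarrow> F t + (d - \<epsilon>) * (s - t) \<le> F s"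
  proof (intro exI[of _ \<delta>] conjI allI impI \<delta>(1))
    fix s assume s: "t < s \<and> s < t + \<delta>"
    have "f t + (d - \<epsilon>) * (s - t) \<le> f s" using \<delta>(2) s by blast
    then show "F t + (d - \<epsilon>) * (s - t) \<le> F s" using assms(2)[of s] assms(3) by linarith
  qed
qed

lemma rdini_mono:
  assumes "rdini g t d" "d' \<le> d"
  shows "rdini g t d'"
  unfolding rdini_def
proof (intro allI impI)
  fix \<epsilon> :: real assume "\<epsilon> > 0"
  then obtain \<delta> where \<delta>: "\<delta> > 0" "\<forall>s. t < s \<and> s < t + \<delta> \<longrightarrow> g t + (d - \<epsilon>) * (s - t) \<le> g s"
    using assms(1) unfolding rdini_def by blast
  show "\<exists>\<delta>>0. \<forall>s. t < s \<and> s < t + \<delta> \<longrightarrow> g t + (d' - \<epsilon>) * (s - t) \<le> g s"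
  proof (intro exI[of _ \<delta>] conjI allI impI \<delta>(1))
    fix s assume s: "t < s \<and> s < t + \<delta>"
    have "(d' - \<epsilon>) * (s - t) \<le> (d - \<epsilon>) * (s - t)" using s assms(2) by (intro mult_right_mono) auto
    moreover have "g t + (d - \<epsilon>) * (s - t) \<le> g s" using \<delta>(2) s by blast
    ultimately show "g t + (d' - \<epsilon>) * (s - t) \<le> g s" by linarith
  qed
qed

lemma ac_sub:
  assumes "abs_cont_on f a b" "a \<le> c" "d \<le> b"
  shows "abs_cont_on f c d"
  unfolding abs_cont_on_def
proof (intro allI impI)
  fix \<epsilon> :: real assume \<epsilon>: "\<epsilon> > 0"
  obtain \<delta> where \<delta>: "\<delta> > 0" and H: "\<And>(n::nat) (l::nat\<Rightarrow>real) (r::nat\<Rightarrow>real). (\<forall>k<n. a \<le> l k \<and> l k \<le> r k \<and> r k \<le> b) \<Longrightarrow>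
       (\<forall>k<n. \<forall>j<n. k \<noteq> j \<longrightarrow> r k \<le> l j \<or> r j \<le> l k) \<Longrightarrow> (\<Sum>k<n. r k - l k) < \<delta>
       \<Longrightarrow> (\<Sum>k<n. norm (f (r k) - f (l k))) < \<epsilon>"
    by (rule acE[OF assms(1) \<epsilon>]) (rule that)
  show "\<exists>\<delta>>0. \<forall>(n::nat) (l::nat\<Rightarrow>real) (r::nat\<Rightarrow>real). (\<forall>k<n. c \<le> l k \<and> l k \<le> r k \<and> r k \<le> d) \<and>
       (\<forall>k<n. \<forall>j<n. k \<noteq> j \<longrightarrow> r k \<le> l j \<or> r j \<le> l k) \<and> (\<Sum>k<n. r k - l k) < \<delta>
       \<longrightarrow> (\<Sum>k<n. norm (f (r k) - f (l k))) < \<epsilon>"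
  proof (intro exI[of _ \<delta>] conjI allI impI \<delta>)
    fix n :: nat and l r :: "nat \<Rightarrow> real"
    assume A: "(\<forall>k<n. c \<le> l k \<and> l k \<le> r k \<and> r k \<le> d) \<and>
       (\<forall>k<n. \<forall>j<n. k \<noteq> j \<longrightarrow> r k \<le> l j \<or> r j \<le> l k) \<and> (\<Sum>k<n. r k - l k) < \<delta>"
    have "\<forall>k<n. a \<le> l k \<and> l k \<le> r k \<and> r k \<le> b" using A assms(2,3) by force
    then show "(\<Sum>k<n. norm (f (r k) - f (l k))) < \<epsilon>" using A by (intro H) auto
  qed
qed

lemma simplex7_iff: "v \<in> simplex7 \<longleftrightarrow> (\<forall>i. 0 \<le> v $ i) \<and> v$1 + v$2 + v$3 + v$4 + v$5 + v$6 + v$7 = 1"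
  by (simp add: simplex7_def sum7)

lemma inner7: "(u::real^7) \<bullet> v = u$1 * v$1 + u$2 * v$2 + u$3 * v$3 + u$4 * v$4 + u$5 * v$5 + u$6 * v$6 + u$7 * v$7"
  by (simp add: inner_vec_def sum7)

lemma BR_support:
  assumes y: "y \<in> BR U v" and k: "y $ k > 0"
  shows "(U *v v) $ j \<le> (U *v v) $ k"
proof (rule ccontr)
  assume "\<not> (U *v v) $ j \<le> (U *v v) $ k"
  then have lt: "(U *v v) $ k < (U *v v) $ j" by simp
  then have jk: "j \<noteq> k" by auto
  have ys: "y \<in> simplex7" and ymax: "\<forall>z\<in>simplex7. z \<bullet> (U *v v) \<le> y \<bullet> (U *v v)"
    using y by (auto simp: BR_def)
  define z where "z = y + (y $ k) *\<^sub>R (axis j 1 - axis k 1)"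
  have zc: "z $ i = y $ i + y $ k * ((if i = j then 1 else 0) - (if i = k then 1 else 0))" for i
    by (simp add: z_def axis_def)
  have "z \<in> simplex7"
    unfolding simplex7_def
  proof (intro CollectI conjI allI)
    fix i
    show "0 \<le> z $ i" using ys k jk unfolding zc simplex7_def by auto
  next
    have ax: "(\<Sum>i\<in>UNIV. axis m (1::real) $ i) = 1" for m by (simp add: axis_def)
    have "(\<Sum>i\<in>UNIV. z $ i) = (\<Sum>i\<in>UNIV. y $ i) + y $ k * ((\<Sum>i\<in>UNIV. axis j 1 $ i) - (\<Sum>i\<in>UNIV. axis k 1 $ i))"
      by (simp add: z_def sum.distrib sum_subtractf sum_distrib_left[symmetric])
    also have "\<dots> = 1" using ys by (simp add: simplex7_def ax)
    finally show "(\<Sum>i\<in>UNIV. z $ i) = 1" .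
  qed
  moreover have "z \<bullet> (U *v v) = y \<bullet> (U *v v) + y $ k * ((U *v v) $ j - (U *v v) $ k)"
    by (simp add: z_def inner_add_left inner_diff_left inner_axis' algebra_simps)
  moreover have "y $ k * ((U *v v) $ j - (U *v v) $ k) > 0" using k lt by simp
  ultimately show False using ymax by fastforce
qed

locale game =
  fixes e :: real and x :: "real \<Rightarrow> real^7"
  assumes e0: "0 < e" and e1: "e < 2/9"
    and sol: "BR_solution (Umat e) x"
    and n123: "\<not> (x 0 $ 1 = x 0 $ 2 \<and> x 0 $ 2 = x 0 $ 3)"
    and n567: "\<not> (x 0 $ 5 = x 0 $ 6 \<and> x 0 $ 6 = x 0 $ 7)"
    and HH: "\<And>T. T > 0 \<Longrightarrow> \<exists>i\<in>{1,2,3::7}. \<forall>j. (Umat e *v x T) $ j \<le> (Umat e *v x T) $ i"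
begin

lemma xsimp: "0 \<le> t \<Longrightarrow> x t \<in> simplex7"
  using sol by (simp add: BR_solution_def)

lemma xnn: "0 \<le> t \<Longrightarrow> 0 \<le> x t $ i"
  using xsimp by (simp add: simplex7_def)

lemma xsum: "0 \<le> t \<Longrightarrow> x t $ 1 + x t $ 2 + x t $ 3 + x t $ 4 + x t $ 5 + x t $ 6 + x t $ 7 = 1"
  using xsimp by (simp add: simplex7_iff)

lemma xle1: "0 \<le> t \<Longrightarrow> x t $ i \<le> 1"
proof -
  assume t: "0 \<le> t"
  have "x t $ i \<le> (\<Sum>j\<in>UNIV. x t $ j)"
    using xnn[OF t] by (intro member_le_sum) auto
  then show ?thesis using xsimp[OF t] by (simp add: simplex7_def)
qed

lemma xac: "0 \<le> T \<Longrightarrow> abs_cont_on x 0 T"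
  using sol by (simp add: BR_solution_def)

definition good :: "real \<Rightarrow> real^7 \<Rightarrow> bool" where
  "good t y \<longleftrightarrow> y \<in> BR (Umat e) (x t) \<and> (x has_vector_derivative (y - x t)) (at t within {0..})"

lemma exN: "\<exists>N. negligible N \<and> (\<forall>t. 0 \<le> t \<longrightarrow> t \<notin> N \<longrightarrow> (\<exists>y. good t y))"
proof -
  have "AE t in lborel. t \<ge> 0 \<longrightarrow>
        (\<exists>v. (x has_vector_derivative v) (at t within {0..}) \<and> v \<in> (\<lambda>y. y - x t) ` BR (Umat e) (x t))"
    using sol by (simp add: BR_solution_def)
  then have "AE t in lebesgue. t \<ge> 0 \<longrightarrow>
        (\<exists>v. (x has_vector_derivative v) (at t within {0..}) \<and> v \<in> (\<lambda>y. y - x t) ` BR (Umat e) (x t))"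
    by (rule AE_completion)
  then obtain N where N: "negligible N" and sub: "{t. \<not> (t \<ge> 0 \<longrightarrow>
        (\<exists>v. (x has_vector_derivative v) (at t within {0..}) \<and> v \<in> (\<lambda>y. y - x t) ` BR (Umat e) (x t)))} \<subseteq> N"
    unfolding eventually_ae_filter_negligible by blast
  show ?thesis
  proof (intro exI[of _ N] conjI allI impI N)
    fix t :: real assume t: "0 \<le> t" "t \<notin> N"
    then have "\<exists>v. (x has_vector_derivative v) (at t within {0..}) \<and> v \<in> (\<lambda>y. y - x t) ` BR (Umat e) (x t)"
      using sub by blast
    then show "\<exists>y. good t y" unfolding good_def by blast
  qed
qed

definition NN where "NN = (SOME N. negligible N \<and> (\<forall>t. 0 \<le> t \<longrightarrow> t \<notin> N \<longrightarrow> (\<exists>y. good t y)))"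

lemma NN: "negligible NN" "0 \<le> t \<Longrightarrow> t \<notin> NN \<Longrightarrow> \<exists>y. good t y"
  using someI_ex[OF exN] unfolding NN_def[symmetric] by blast+

definition ACX :: "(real \<Rightarrow> real) \<Rightarrow> bool" where
  "ACX g \<longleftrightarrow> (\<forall>T\<ge>0. \<exists>L\<ge>0. \<forall>s\<in>{0..T}. \<forall>t\<in>{0..T}. \<bar>g s - g t\<bar> \<le> L * (\<bar>s - t\<bar> + norm (x s - x t)))"

lemma ACX_ac:
  assumes "ACX g" "0 \<le> u" "u \<le> v"
  shows "abs_cont_on g u v"
proof -
  obtain L where L: "L \<ge> 0" "\<forall>s\<in>{0..v}. \<forall>t\<in>{0..v}. \<bar>g s - g t\<bar> \<le> L * (\<bar>s - t\<bar> + norm (x s - x t))"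
    using assms unfolding ACX_def by (meson order_trans)
  have "abs_cont_on x u v" using ac_sub[OF xac[of v] assms(2)] assms by simp
  then show ?thesis
    by (rule ac_lip_comp[OF _ L(1)]) (use L(2) assms in auto)
qed

lemma ACX_add: "ACX f \<Longrightarrow> ACX g \<Longrightarrow> ACX (\<lambda>t. f t + g t)"
  unfolding ACX_def
proof (intro allI impI)
  fix T :: real assume f: "\<forall>T\<ge>0. \<exists>L\<ge>0. \<forall>s\<in>{0..T}. \<forall>t\<in>{0..T}. \<bar>f s - f t\<bar> \<le> L * (\<bar>s - t\<bar> + norm (x s - x t))"
    and g: "\<forall>T\<ge>0. \<exists>L\<ge>0. \<forall>s\<in>{0..T}. \<forall>t\<in>{0..T}. \<bar>g s - g t\<bar> \<le> L * (\<bar>s - t\<bar> + norm (x s - x t))"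
    and T: "0 \<le> T"
  obtain L1 where L1: "L1 \<ge> 0" "\<forall>s\<in>{0..T}. \<forall>t\<in>{0..T}. \<bar>f s - f t\<bar> \<le> L1 * (\<bar>s - t\<bar> + norm (x s - x t))"
    using f T by blast
  obtain L2 where L2: "L2 \<ge> 0" "\<forall>s\<in>{0..T}. \<forall>t\<in>{0..T}. \<bar>g s - g t\<bar> \<le> L2 * (\<bar>s - t\<bar> + norm (x s - x t))"
    using g T by blast
  show "\<exists>L\<ge>0. \<forall>s\<in>{0..T}. \<forall>t\<in>{0..T}. \<bar>f s + g s - (f t + g t)\<bar> \<le> L * (\<bar>s - t\<bar> + norm (x s - x t))"
  proof (intro exI[of _ "L1 + L2"] conjI ballI)
    show "0 \<le> L1 + L2" using L1 L2 by simp
    fix s t assume st: "s \<in> {0..T}" "t \<in> {0..T}"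
    have "\<bar>f s + g s - (f t + g t)\<bar> \<le> \<bar>f s - f t\<bar> + \<bar>g s - g t\<bar>" by simp
    also have "\<dots> \<le> L1 * (\<bar>s - t\<bar> + norm (x s - x t)) + L2 * (\<bar>s - t\<bar> + norm (x s - x t))"
      using L1(2) L2(2) st by (meson add_mono)
    finally show "\<bar>f s + g s - (f t + g t)\<bar> \<le> (L1 + L2) * (\<bar>s - t\<bar> + norm (x s - x t))"
      by (simp add: distrib_right)
  qed
qed

lemma ACX_cmult: "ACX f \<Longrightarrow> ACX (\<lambda>t. c * f t)"
  unfolding ACX_def
proof (intro allI impI)
  fix T :: real assume f: "\<forall>T\<ge>0. \<exists>L\<ge>0. \<forall>s\<in>{0..T}. \<forall>t\<in>{0..T}. \<bar>f s - f t\<bar> \<le> L * (\<bar>s - t\<bar> + norm (x s - x t))"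
    and T: "0 \<le> T"
  obtain L1 where L1: "L1 \<ge> 0" "\<forall>s\<in>{0..T}. \<forall>t\<in>{0..T}. \<bar>f s - f t\<bar> \<le> L1 * (\<bar>s - t\<bar> + norm (x s - x t))"
    using f T by blast
  show "\<exists>L\<ge>0. \<forall>s\<in>{0..T}. \<forall>t\<in>{0..T}. \<bar>c * f s - c * f t\<bar> \<le> L * (\<bar>s - t\<bar> + norm (x s - x t))"
  proof (intro exI[of _ "\<bar>c\<bar> * L1"] conjI ballI)
    show "0 \<le> \<bar>c\<bar> * L1" using L1 by simp
    fix s t assume st: "s \<in> {0..T}" "t \<in> {0..T}"
    have "\<bar>c * f s - c * f t\<bar> = \<bar>c\<bar> * \<bar>f s - f t\<bar>" by (simp add: abs_mult[symmetric] right_diff_distrib)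
    also have "\<dots> \<le> \<bar>c\<bar> * (L1 * (\<bar>s - t\<bar> + norm (x s - x t)))"
      using L1(2) st by (intro mult_left_mono) auto
    finally show "\<bar>c * f s - c * f t\<bar> \<le> \<bar>c\<bar> * L1 * (\<bar>s - t\<bar> + norm (x s - x t))" by simp
  qed
qed

lemma ACX_max: "ACX f \<Longrightarrow> ACX g \<Longrightarrow> ACX (\<lambda>t. max (f t) (g t))"
  unfolding ACX_def
proof (intro allI impI)
  fix T :: real assume f: "\<forall>T\<ge>0. \<exists>L\<ge>0. \<forall>s\<in>{0..T}. \<forall>t\<in>{0..T}. \<bar>f s - f t\<bar> \<le> L * (\<bar>s - t\<bar> + norm (x s - x t))"
    and g: "\<forall>T\<ge>0. \<exists>L\<ge>0. \<forall>s\<in>{0..T}. \<forall>t\<in>{0..T}. \<bar>g s - g t\<bar> \<le> L * (\<bar>s - t\<bar> + norm (x s - x t))"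
    and T: "0 \<le> T"
  obtain L1 where L1: "L1 \<ge> 0" "\<forall>s\<in>{0..T}. \<forall>t\<in>{0..T}. \<bar>f s - f t\<bar> \<le> L1 * (\<bar>s - t\<bar> + norm (x s - x t))"
    using f T by blast
  obtain L2 where L2: "L2 \<ge> 0" "\<forall>s\<in>{0..T}. \<forall>t\<in>{0..T}. \<bar>g s - g t\<bar> \<le> L2 * (\<bar>s - t\<bar> + norm (x s - x t))"
    using g T by blast
  show "\<exists>L\<ge>0. \<forall>s\<in>{0..T}. \<forall>t\<in>{0..T}. \<bar>max (f s) (g s) - max (f t) (g t)\<bar> \<le> L * (\<bar>s - t\<bar> + norm (x s - x t))"
  proof (intro exI[of _ "L1 + L2"] conjI ballI)
    show "0 \<le> L1 + L2" using L1 L2 by simp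
    fix s t assume st: "s \<in> {0..T}" "t \<in> {0..T}"
    have q: "0 \<le> \<bar>s - t\<bar> + norm (x s - x t)" by simp
    have "\<bar>max (f s) (g s) - max (f t) (g t)\<bar> \<le> \<bar>f s - f t\<bar> + \<bar>g s - g t\<bar>" by (auto simp: max_def abs_if)
    also have "\<dots> \<le> L1 * (\<bar>s - t\<bar> + norm (x s - x t)) + L2 * (\<bar>s - t\<bar> + norm (x s - x t))"
      using L1(2) L2(2) st by (meson add_mono)
    finally show "\<bar>max (f s) (g s) - max (f t) (g t)\<bar> \<le> (L1 + L2) * (\<bar>s - t\<bar> + norm (x s - x t))"
      by (simp add: distrib_right)
  qed
qed

lemma ACX_comp: "ACX (\<lambda>t. exp t * x t $ i)"
  unfolding ACX_def
proof (intro allI impI)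
  fix T :: real assume T: "0 \<le> T"
  show "\<exists>L\<ge>0. \<forall>s\<in>{0..T}. \<forall>t\<in>{0..T}. \<bar>exp s * x s $ i - exp t * x t $ i\<bar> \<le> L * (\<bar>s - t\<bar> + norm (x s - x t))"
  proof (intro exI[of _ "exp T"] conjI ballI)
    show "0 \<le> exp T" by simp
    fix s t assume st: "s \<in> {0..T}" "t \<in> {0..T}"
    have "exp s * x s $ i - exp t * x t $ i = (exp s - exp t) * x s $ i + exp t * (x s $ i - x t $ i)"
      by (simp add: algebra_simps)
    then have "\<bar>exp s * x s $ i - exp t * x t $ i\<bar> \<le> \<bar>exp s - exp t\<bar> * \<bar>x s $ i\<bar> + exp t * \<bar>x s $ i - x t $ i\<bar>"
      by (metis abs_mult abs_triangle_ineq abs_exp_cancel)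
    also have "\<dots> \<le> exp T * \<bar>s - t\<bar> * 1 + exp T * norm (x s - x t)"
    proof (rule add_mono)
      have "\<bar>x s $ i\<bar> \<le> 1" using xnn[of s i] xle1[of s i] st by auto
      then show "\<bar>exp s - exp t\<bar> * \<bar>x s $ i\<bar> \<le> exp T * \<bar>s - t\<bar> * 1"
        using exp_lip[OF st] by (intro mult_mono) auto
      have "\<bar>x s $ i - x t $ i\<bar> \<le> norm (x s - x t)" using component_le_norm_cart[of "x s - x t" i] by simp
      then show "exp t * \<bar>x s $ i - x t $ i\<bar> \<le> exp T * norm (x s - x t)"
        using st by (intro mult_mono) auto
    qed
    finally show "\<bar>exp s * x s $ i - exp t * x t $ i\<bar> \<le> exp T * (\<bar>s - t\<bar> + norm (x s - x t))"
      by (simp add: distrib_left)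
  qed
qed

lemma mono_tool:
  assumes "ACX g" "0 \<le> u" "u \<le> v"
    and D: "\<And>t y. u < t \<Longrightarrow> t < v \<Longrightarrow> good t y \<Longrightarrow> rdini g t 0"
  shows "g u \<le> g v"
proof (rule mono_ac[OF ACX_ac[OF assms(1-3)] assms(3) NN(1)])
  fix t assume t: "t \<in> {u<..<v}" "t \<notin> NN"
  then obtain y where "good t y" using NN(2)[of t] assms(2) by auto
  then show "rdini g t 0" using D t by auto
qed

lemma good_BR: "good t y \<Longrightarrow> y \<in> BR (Umat e) (x t)"
  by (simp add: good_def)

lemma good_nn: "good t y \<Longrightarrow> 0 \<le> y $ i"
  by (auto simp: good_def BR_def simplex7_def)

lemma good_der:
  assumes "good t y"
  shows "((\<lambda>s. exp s * x s $ i) has_real_derivative exp t * y $ i) (at t within {0..})"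
proof -
  have "(x has_vector_derivative (y - x t)) (at t within {0..})" using assms by (simp add: good_def)
  then have "((\<lambda>s. x s $ i) has_vector_derivative (y - x t) $ i) (at t within {0..})"
    by (rule bounded_linear.has_vector_derivative[OF bounded_linear_vec_nth])
  then have d1: "((\<lambda>s. x s $ i) has_real_derivative (y - x t) $ i) (at t within {0..})"
    by (simp add: has_real_derivative_iff_has_vector_derivative)
  have d0: "(exp has_real_derivative exp t) (at t within {0..})"
    by (rule has_field_derivative_at_within[OF DERIV_exp])
  have "((\<lambda>s. exp s * x s $ i) has_real_derivative exp t * x t $ i + (y - x t) $ i * exp t) (at t within {0..})"
    using DERIV_mult[OF d0 d1] .
  moreover have "exp t * x t $ i + (y - x t) $ i * exp t = exp t * y $ i" by (simp add: algebra_simps)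
  ultimately show ?thesis by simp
qed

end

context game begin

definition z :: "7 \<Rightarrow> real \<Rightarrow> real" where "z i t = exp t * x t $ i"
definition R1 where "R1 t = - z 2 t + e * z 3 t"
definition R2 where "R2 t = e * z 1 t - z 3 t"
definition R3 where "R3 t = - z 1 t + e * z 2 t"
definition W where "W t = max (R1 t) (max (R2 t) (R3 t))"
definition S where "S t = z 1 t + z 2 t + z 3 t"
definition Dd where "Dd t = max (R1 t - (e-1)/3 * S t) (max (R2 t - (e-1)/3 * S t) (R3 t - (e-1)/3 * S t))"

lemma ACX_z: "ACX (z i)"
  unfolding z_def[abs_def] by (rule ACX_comp)

lemma ACX_R: "ACX R1" "ACX R2" "ACX R3"
proof -
  have m: "ACX (\<lambda>t. - f t)" if "ACX f" for f using ACX_cmult[OF that, of "-1"] by simp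
  show "ACX R1" unfolding R1_def[abs_def] by (intro ACX_add ACX_cmult m ACX_z)
  show "ACX R2" unfolding R2_def[abs_def] diff_conv_add_uminus by (intro ACX_add ACX_cmult m ACX_z)
  show "ACX R3" unfolding R3_def[abs_def] by (intro ACX_add ACX_cmult m ACX_z)
qed

lemma ACX_W: "ACX W"
  unfolding W_def[abs_def] by (intro ACX_max ACX_R)

lemma ACX_S: "ACX S"
  unfolding S_def[abs_def] by (intro ACX_add ACX_z)

lemma ACX_Dd: "ACX Dd"
proof -
  have m: "ACX (\<lambda>t. f t - c * S t)" if "ACX f" for f c
    using ACX_add[OF that ACX_cmult[OF ACX_S, of "-c"]] by simp
  show ?thesis unfolding Dd_def[abs_def] by (intro ACX_max m ACX_R)
qed

definition cc where "cc t = exp t * (-10 * x t $ 4 + (e - 1/3) * (x t $ 5 + x t $ 6 + x t $ 7))"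

lemma P_R:
  "exp t * (Umat e *v x t) $ 1 = R1 t + cc t"
  "exp t * (Umat e *v x t) $ 2 = R2 t + cc t"
  "exp t * (Umat e *v x t) $ 3 = R3 t + cc t"
  by (simp_all add: Ux R1_def R2_def R3_def z_def cc_def algebra_simps)

lemma P_le: "(Umat e *v x t) $ i \<le> (Umat e *v x t) $ j \<Longrightarrow> exp t * (Umat e *v x t) $ i \<le> exp t * (Umat e *v x t) $ j"
  by (simp)

lemma supp1: "good t y \<Longrightarrow> 0 < y $ 1 \<Longrightarrow> R1 t = W t"
proof -
  assume g: "good t y" and y: "0 < y $ 1"
  have "(Umat e *v x t) $ 2 \<le> (Umat e *v x t) $ 1" "(Umat e *v x t) $ 3 \<le> (Umat e *v x t) $ 1"
    using BR_support[OF good_BR[OF g] y] by auto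
  then have "R2 t \<le> R1 t" "R3 t \<le> R1 t" using P_le P_R[of t] by fastforce+
  then show ?thesis by (simp add: W_def)
qed

lemma supp2: "good t y \<Longrightarrow> 0 < y $ 2 \<Longrightarrow> R2 t = W t"
proof -
  assume g: "good t y" and y: "0 < y $ 2"
  have "(Umat e *v x t) $ 1 \<le> (Umat e *v x t) $ 2" "(Umat e *v x t) $ 3 \<le> (Umat e *v x t) $ 2"
    using BR_support[OF good_BR[OF g] y] by auto
  then have "R1 t \<le> R2 t" "R3 t \<le> R2 t" using P_le P_R[of t] by fastforce+
  then show ?thesis by (simp add: W_def)
qed

lemma supp3: "good t y \<Longrightarrow> 0 < y $ 3 \<Longrightarrow> R3 t = W t"
proof -
  assume g: "good t y" and y: "0 < y $ 3"
  have "(Umat e *v x t) $ 1 \<le> (Umat e *v x t) $ 3" "(Umat e *v x t) $ 2 \<le> (Umat e *v x t) $ 3"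
    using BR_support[OF good_BR[OF g] y] by auto
  then have "R1 t \<le> R3 t" "R2 t \<le> R3 t" using P_le P_R[of t] by fastforce+
  then show ?thesis by (simp add: W_def)
qed

lemma zder: "good t y \<Longrightarrow> (z i has_real_derivative exp t * y $ i) (at t within {0..})"
  unfolding z_def[abs_def] by (rule good_der)

lemma R1der: "good t y \<Longrightarrow> (R1 has_real_derivative exp t * (- y $ 2 + e * y $ 3)) (at t within {0..})"
proof -
  assume g: "good t y"
  have "((\<lambda>t. - z 2 t + e * z 3 t) has_real_derivative - (exp t * y $ 2) + e * (exp t * y $ 3)) (at t within {0..})"
    by (intro DERIV_add DERIV_minus DERIV_cmult zder[OF g])
  then show ?thesis unfolding R1_def[abs_def] by (simp add: algebra_simps)
qed

lemma R2der: "good t y \<Longrightarrow> (R2 has_real_derivative exp t * (e * y $ 1 - y $ 3)) (at t within {0..})"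
proof -
  assume g: "good t y"
  have "((\<lambda>t. e * z 1 t - z 3 t) has_real_derivative e * (exp t * y $ 1) - (exp t * y $ 3)) (at t within {0..})"
    by (intro DERIV_diff DERIV_cmult zder[OF g])
  then show ?thesis unfolding R2_def[abs_def] by (simp add: algebra_simps)
qed

lemma R3der: "good t y \<Longrightarrow> (R3 has_real_derivative exp t * (- y $ 1 + e * y $ 2)) (at t within {0..})"
proof -
  assume g: "good t y"
  have "((\<lambda>t. - z 1 t + e * z 2 t) has_real_derivative - (exp t * y $ 1) + e * (exp t * y $ 2)) (at t within {0..})"
    by (intro DERIV_add DERIV_minus DERIV_cmult zder[OF g])
  then show ?thesis unfolding R3_def[abs_def] by (simp add: algebra_simps)
qed

lemma Sder: "good t y \<Longrightarrow> (S has_real_derivative exp t * (y $ 1 + y $ 2 + y $ 3)) (at t within {0..})"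
proof -
  assume g: "good t y"
  have "((\<lambda>t. z 1 t + z 2 t + z 3 t) has_real_derivative exp t * y $ 1 + exp t * y $ 2 + exp t * y $ 3) (at t within {0..})"
    by (intro DERIV_add zder[OF g])
  then show ?thesis unfolding S_def[abs_def] by (simp add: algebra_simps)
qed

end

lemma rd_from:
  assumes "(f has_real_derivative d) (at t within {0..})" "0 \<le> t" "0 \<le> d"
    "\<And>s. f s \<le> F s" "f t = F t"
  shows "rdini F t 0"
  using rdini_max[OF rdini_mono[OF deriv_rdini[OF assms(1,2)] assms(3)] assms(4,5)] .

context game begin

lemma R_le_W: "R1 t \<le> W t" "R2 t \<le> W t" "R3 t \<le> W t"
  by (auto simp: W_def)

lemma y0_1: "good t y \<Longrightarrow> R1 t < W t \<Longrightarrow> y $ 1 = 0"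
  using supp1 good_nn[of t y 1] by fastforce
lemma y0_2: "good t y \<Longrightarrow> R2 t < W t \<Longrightarrow> y $ 2 = 0"
  using supp2 good_nn[of t y 2] by fastforce
lemma y0_3: "good t y \<Longrightarrow> R3 t < W t \<Longrightarrow> y $ 3 = 0"
  using supp3 good_nn[of t y 3] by fastforce

lemma W_rdini:
  assumes g: "good t y" and t: "0 \<le> t" and ne: "\<not> (R1 t = R2 t \<and> R2 t = R3 t)"
  shows "rdini W t 0"
proof -
  have y: "0 \<le> y $ 1" "0 \<le> y $ 2" "0 \<le> y $ 3" using good_nn[OF g] by auto
  have ep: "0 < exp t" by simp
  show ?thesis
  proof (cases "R1 t = W t \<and> R2 t < W t")
    case True
    then have "y $ 2 = 0" using y0_2[OF g] by auto
    then have d: "0 \<le> exp t * (- y $ 2 + e * y $ 3)" using y e0 by simp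
    show ?thesis by (rule rd_from[OF R1der[OF g] t d]) (use True R_le_W in auto)
  next
    case F1: False
    show ?thesis
    proof (cases "R2 t = W t \<and> R3 t < W t")
      case True
      then have "y $ 3 = 0" using y0_3[OF g] by auto
      then have d: "0 \<le> exp t * (e * y $ 1 - y $ 3)" using y e0 by simp
      show ?thesis by (rule rd_from[OF R2der[OF g] t d]) (use True R_le_W in auto)
    next
      case F2: False
      show ?thesis
      proof (cases "R3 t = W t \<and> R1 t < W t")
        case True
        then have "y $ 1 = 0" using y0_1[OF g] by auto
        then have d: "0 \<le> exp t * (- y $ 1 + e * y $ 2)" using y e0 by simp
        show ?thesis by (rule rd_from[OF R3der[OF g] t d]) (use True R_le_W in auto)
      next
        case F3: False
        have "R1 t = W t \<or> R2 t = W t \<or> R3 t = W t" by (auto simp: W_def max_def)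
        then have "R1 t = W t \<and> R2 t = W t \<and> R3 t = W t"
          using F1 F2 F3 R_le_W[of t] by (auto simp: less_le)
        then show ?thesis using ne by simp
      qed
    qed
  qed
qed

lemma Q1der: "good t y \<Longrightarrow> ((\<lambda>t. R1 t - (e-1)/3 * S t) has_real_derivative
   exp t * (- y $ 2 + e * y $ 3) - (e-1)/3 * (exp t * (y $ 1 + y $ 2 + y $ 3))) (at t within {0..})"
  by (intro DERIV_diff DERIV_cmult R1der Sder)
lemma Q2der: "good t y \<Longrightarrow> ((\<lambda>t. R2 t - (e-1)/3 * S t) has_real_derivative
   exp t * (e * y $ 1 - y $ 3) - (e-1)/3 * (exp t * (y $ 1 + y $ 2 + y $ 3))) (at t within {0..})"
  by (intro DERIV_diff DERIV_cmult R2der Sder)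
lemma Q3der: "good t y \<Longrightarrow> ((\<lambda>t. R3 t - (e-1)/3 * S t) has_real_derivative
   exp t * (- y $ 1 + e * y $ 2) - (e-1)/3 * (exp t * (y $ 1 + y $ 2 + y $ 3))) (at t within {0..})"
  by (intro DERIV_diff DERIV_cmult R3der Sder)

lemma Dd_eq: "Dd t = W t - (e-1)/3 * S t"
  by (simp add: Dd_def W_def max_def)

lemma Dd_rdini:
  assumes g: "good t y" and t: "0 \<le> t"
  shows "rdini Dd t 0"
proof -
  have y: "0 \<le> y $ 1" "0 \<le> y $ 2" "0 \<le> y $ 3" using good_nn[OF g] by auto
  have ep: "0 < exp t" by simp
  define m where "m = (e-1)/3 * (exp t * (y $ 1 + y $ 2 + y $ 3))"
  have m: "m \<le> 0" unfolding m_def using y e0 e1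
    by (intro mult_nonpos_nonneg) auto
  have le: "R1 s - (e-1)/3 * S s \<le> Dd s" "R2 s - (e-1)/3 * S s \<le> Dd s" "R3 s - (e-1)/3 * S s \<le> Dd s" for s
    by (auto simp: Dd_def)
  have eq1: "R1 t - (e-1)/3 * S t = Dd t" if "R1 t = W t" using that by (simp add: Dd_eq)
  have eq2: "R2 t - (e-1)/3 * S t = Dd t" if "R2 t = W t" using that by (simp add: Dd_eq)
  have eq3: "R3 t - (e-1)/3 * S t = Dd t" if "R3 t = W t" using that by (simp add: Dd_eq)
  note eq = eq1 eq2 eq3
  show ?thesis
  proof (cases "R1 t = W t \<and> R2 t < W t")
    case True
    then have "y $ 2 = 0" using y0_2[OF g] by auto
    moreover have "0 \<le> exp t * (e * y $ 3)" using y e0 by simp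
    ultimately have d: "0 \<le> exp t * (- y $ 2 + e * y $ 3) - m" using m by simp
    show ?thesis by (rule rd_from[OF Q1der[OF g, folded m_def] t d]) (use True le eq in auto)
  next
    case F1: False
    show ?thesis
    proof (cases "R2 t = W t \<and> R3 t < W t")
      case True
      then have "y $ 3 = 0" using y0_3[OF g] by auto
      moreover have "0 \<le> exp t * (e * y $ 1)" using y e0 by simp
      ultimately have d: "0 \<le> exp t * (e * y $ 1 - y $ 3) - m" using m by simp
      show ?thesis by (rule rd_from[OF Q2der[OF g, folded m_def] t d]) (use True le eq in auto)
    next
      case F2: False
      show ?thesis
      proof (cases "R3 t = W t \<and> R1 t < W t")
        case True
        then have "y $ 1 = 0" using y0_1[OF g] by auto
        moreover have "0 \<le> exp t * (e * y $ 2)" using y e0 by simp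
        ultimately have d: "0 \<le> exp t * (- y $ 1 + e * y $ 2) - m" using m by simp
        show ?thesis by (rule rd_from[OF Q3der[OF g, folded m_def] t d]) (use True le eq in auto)
      next
        case F3: False
        have "R1 t = W t \<or> R2 t = W t \<or> R3 t = W t" by (auto simp: W_def max_def)
        then have all: "R1 t = W t \<and> R2 t = W t \<and> R3 t = W t"
          using F1 F2 F3 R_le_W[of t] by (auto simp: less_le)
        define d1 where "d1 = exp t * (- y $ 2 + e * y $ 3) - m"
        define d2 where "d2 = exp t * (e * y $ 1 - y $ 3) - m"
        define d3 where "d3 = exp t * (- y $ 1 + e * y $ 2) - m"
        have "d1 + d2 + d3 = 0" unfolding d1_def d2_def d3_def m_def by (simp add: field_simps)
        then have "0 \<le> d1 \<or> 0 \<le> d2 \<or> 0 \<le> d3" by linarith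
        then show ?thesis
        proof (elim disjE)
          assume d: "0 \<le> d1"
          show ?thesis by (rule rd_from[OF Q1der[OF g, folded m_def] t d[unfolded d1_def]]) (use all le eq in auto)
        next
          assume d: "0 \<le> d2"
          show ?thesis by (rule rd_from[OF Q2der[OF g, folded m_def] t d[unfolded d2_def]]) (use all le eq in auto)
        next
          assume d: "0 \<le> d3"
          show ?thesis by (rule rd_from[OF Q3der[OF g, folded m_def] t d[unfolded d3_def]]) (use all le eq in auto)
        qed
      qed
    qed
  qed
qed

lemma Dd_mono: "0 \<le> u \<Longrightarrow> u \<le> v \<Longrightarrow> Dd u \<le> Dd v"
  by (rule mono_tool[OF ACX_Dd]) (auto intro: Dd_rdini)

lemma Dd0: "0 < Dd 0"
proof (rule ccontr)
  assume "\<not> 0 < Dd 0"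
  then have le: "R1 0 - (e-1)/3 * S 0 \<le> 0" "R2 0 - (e-1)/3 * S 0 \<le> 0" "R3 0 - (e-1)/3 * S 0 \<le> 0"
    by (auto simp: Dd_def)
  have sum: "R1 0 + R2 0 + R3 0 = (e - 1) * S 0" by (simp add: R1_def R2_def R3_def S_def algebra_simps)
  have E: "R1 0 = R2 0" "R2 0 = R3 0" using le sum by linarith+
  define a1 where "a1 = x 0 $ 1"
  define a2 where "a2 = x 0 $ 2"
  define a3 where "a3 = x 0 $ 3"
  have E1: "- a2 + e * a3 = e * a1 - a3" using E(1) by (simp add: R1_def R2_def z_def a1_def a2_def a3_def)
  have E2: "e * a1 - a3 = - a1 + e * a2" using E(2) by (simp add: R2_def R3_def z_def a1_def a2_def a3_def)
  have "(a2 - a1) * (1 + e + e * e) = (1 + e) * (a3 - (1 + e) * a1 + e * a2) - ((1 + e) * a3 - e * a1 - a2)"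
    by (simp add: algebra_simps)
  also have "\<dots> = 0" using E1 E2 by (simp add: algebra_simps)
  finally have "(a2 - a1) * (1 + e + e * e) = 0" .
  moreover have "1 + e + e * e > 0" using e0 by (simp add: add_pos_pos)
  ultimately have "a2 = a1" by simp
  moreover then have "a3 = a1" using E2 by (simp add: algebra_simps)
  ultimately show False using n123 by (simp add: a1_def a2_def a3_def)
qed

lemma not_all_eq: "0 \<le> t \<Longrightarrow> \<not> (R1 t = R2 t \<and> R2 t = R3 t)"
proof
  assume t: "0 \<le> t" and E: "R1 t = R2 t \<and> R2 t = R3 t"
  have sum: "R1 t + R2 t + R3 t = (e - 1) * S t" by (simp add: R1_def R2_def R3_def S_def algebra_simps)
  have "Dd t = 0" using E sum by (simp add: Dd_def)
  moreover have "Dd 0 \<le> Dd t" using Dd_mono t by simp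
  ultimately show False using Dd0 by simp
qed

lemma W_mono: "0 \<le> u \<Longrightarrow> u \<le> v \<Longrightarrow> W u \<le> W v"
proof (rule mono_tool[OF ACX_W])
  fix t y assume "0 \<le> u" "u < t" "good t y"
  moreover then have "0 \<le> t" by simp
  ultimately show "rdini W t 0" using W_rdini not_all_eq by blast
qed

lemma z_mono: "0 \<le> u \<Longrightarrow> u \<le> v \<Longrightarrow> z i u \<le> z i v"
proof (rule mono_tool[OF ACX_z])
  fix t y assume "u < t" "good t y" "0 \<le> u"
  then show "rdini (z i) t 0"
    using rd_from[OF zder[of t y i], of "z i"] good_nn[of t y i] by auto
qed

lemma negz_rdini:
  assumes "good t y" "0 \<le> t" "y $ i = 0"
  shows "rdini (\<lambda>s. - z i s) t 0"
proof -
  have "((\<lambda>s. - z i s) has_real_derivative - (exp t * y $ i)) (at t within {0..})"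
    by (intro DERIV_minus zder assms(1))
  then show ?thesis using rd_from[of "\<lambda>s. - z i s" _ t "\<lambda>s. - z i s"] assms by simp
qed

lemma z_const1: "0 \<le> u \<Longrightarrow> u \<le> v \<Longrightarrow> (\<And>\<tau>. u < \<tau> \<Longrightarrow> \<tau> < v \<Longrightarrow> R1 \<tau> < W \<tau>) \<Longrightarrow> z 1 v = z 1 u"
proof -
  assume uv: "0 \<le> u" "u \<le> v" and H: "\<And>\<tau>. u < \<tau> \<Longrightarrow> \<tau> < v \<Longrightarrow> R1 \<tau> < W \<tau>"
  have A: "ACX (\<lambda>s. - z 1 s)" using ACX_cmult[OF ACX_z, of "-1" 1] by simp
  have "- z 1 u \<le> - z 1 v"
  proof (rule mono_tool[OF A uv])
    fix t y assume t: "u < t" "t < v" "good t y"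
    have "R1 t < W t" using H t by blast
    then have "y $ 1 = 0" using y0_1 t(3) by blast
    then show "rdini (\<lambda>s. - z 1 s) t 0" using negz_rdini t uv by simp
  qed
  then show ?thesis using z_mono[OF uv, of 1] by simp
qed

lemma z_const2: "0 \<le> u \<Longrightarrow> u \<le> v \<Longrightarrow> (\<And>\<tau>. u < \<tau> \<Longrightarrow> \<tau> < v \<Longrightarrow> R2 \<tau> < W \<tau>) \<Longrightarrow> z 2 v = z 2 u"
proof -
  assume uv: "0 \<le> u" "u \<le> v" and H: "\<And>\<tau>. u < \<tau> \<Longrightarrow> \<tau> < v \<Longrightarrow> R2 \<tau> < W \<tau>"
  have A: "ACX (\<lambda>s. - z 2 s)" using ACX_cmult[OF ACX_z, of "-1" 2] by simp
  have "- z 2 u \<le> - z 2 v"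
  proof (rule mono_tool[OF A uv])
    fix t y assume t: "u < t" "t < v" "good t y"
    have "R2 t < W t" using H t by blast
    then have "y $ 2 = 0" using y0_2 t(3) by blast
    then show "rdini (\<lambda>s. - z 2 s) t 0" using negz_rdini t uv by simp
  qed
  then show ?thesis using z_mono[OF uv, of 2] by simp
qed

lemma z_const3: "0 \<le> u \<Longrightarrow> u \<le> v \<Longrightarrow> (\<And>\<tau>. u < \<tau> \<Longrightarrow> \<tau> < v \<Longrightarrow> R3 \<tau> < W \<tau>) \<Longrightarrow> z 3 v = z 3 u"
proof -
  assume uv: "0 \<le> u" "u \<le> v" and H: "\<And>\<tau>. u < \<tau> \<Longrightarrow> \<tau> < v \<Longrightarrow> R3 \<tau> < W \<tau>"
  have A: "ACX (\<lambda>s. - z 3 s)" using ACX_cmult[OF ACX_z, of "-1" 3] by simp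
  have "- z 3 u \<le> - z 3 v"
  proof (rule mono_tool[OF A uv])
    fix t y assume t: "u < t" "t < v" "good t y"
    have "R3 t < W t" using H t by blast
    then have "y $ 3 = 0" using y0_3 t(3) by blast
    then show "rdini (\<lambda>s. - z 3 s) t 0" using negz_rdini t uv by simp
  qed
  then show ?thesis using z_mono[OF uv, of 3] by simp
qed

end

context game begin

definition R5 where "R5 t = - z 6 t + e * z 7 t"
definition R6 where "R6 t = e * z 5 t - z 7 t"
definition R7 where "R7 t = - z 5 t + e * z 6 t"
definition Wq where "Wq t = max (R5 t) (max (R6 t) (R7 t))"
definition Sq where "Sq t = z 5 t + z 6 t + z 7 t"

definition Ddq where "Ddq t = max (R5 t - (e-1)/3 * Sq t) (max (R6 t - (e-1)/3 * Sq t) (R7 t - (e-1)/3 * Sq t))"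


lemma ACX_Rq: "ACX R5" "ACX R6" "ACX R7"
proof -
  have m: "ACX (\<lambda>t. - f t)" if "ACX f" for f using ACX_cmult[OF that, of "-1"] by simp
  show "ACX R5" unfolding R5_def[abs_def] by (intro ACX_add ACX_cmult m ACX_z)
  show "ACX R6" unfolding R6_def[abs_def] diff_conv_add_uminus by (intro ACX_add ACX_cmult m ACX_z)
  show "ACX R7" unfolding R7_def[abs_def] by (intro ACX_add ACX_cmult m ACX_z)
qed

lemma ACX_Wq: "ACX Wq"
  unfolding Wq_def[abs_def] by (intro ACX_max ACX_Rq)

lemma ACX_Sq: "ACX Sq"
  unfolding Sq_def[abs_def] by (intro ACX_add ACX_z)

lemma ACX_Ddq: "ACX Ddq"
proof -
  have m: "ACX (\<lambda>t. f t - c * Sq t)" if "ACX f" for f c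
    using ACX_add[OF that ACX_cmult[OF ACX_Sq, of "-c"]] by simp
  show ?thesis unfolding Ddq_def[abs_def] by (intro ACX_max m ACX_Rq)
qed

definition ccq where "ccq t = exp t * (- (x t $ 1 + x t $ 2 + x t $ 3) / 3 + 10 * x t $ 4)"


lemma P_Rq:
  "exp t * (Umat e *v x t) $ 5 = R5 t + ccq t"
  "exp t * (Umat e *v x t) $ 6 = R6 t + ccq t"
  "exp t * (Umat e *v x t) $ 7 = R7 t + ccq t"
  by (simp_all add: Ux R5_def R6_def R7_def z_def ccq_def algebra_simps)

lemma P_leq: "(Umat e *v x t) $ i \<le> (Umat e *v x t) $ j \<Longrightarrow> exp t * (Umat e *v x t) $ i \<le> exp t * (Umat e *v x t) $ j"
  by (simp)

lemma supp5: "good t y \<Longrightarrow> 0 < y $ 5 \<Longrightarrow> R5 t = Wq t"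
proof -
  assume g: "good t y" and y: "0 < y $ 5"
  have "(Umat e *v x t) $ 6 \<le> (Umat e *v x t) $ 5" "(Umat e *v x t) $ 7 \<le> (Umat e *v x t) $ 5"
    using BR_support[OF good_BR[OF g] y] by auto
  then have "R6 t \<le> R5 t" "R7 t \<le> R5 t" using P_leq P_Rq[of t] by fastforce+
  then show ?thesis by (simp add: Wq_def)
qed

lemma supp6: "good t y \<Longrightarrow> 0 < y $ 6 \<Longrightarrow> R6 t = Wq t"
proof -
  assume g: "good t y" and y: "0 < y $ 6"
  have "(Umat e *v x t) $ 5 \<le> (Umat e *v x t) $ 6" "(Umat e *v x t) $ 7 \<le> (Umat e *v x t) $ 6"
    using BR_support[OF good_BR[OF g] y] by auto
  then have "R5 t \<le> R6 t" "R7 t \<le> R6 t" using P_leq P_Rq[of t] by fastforce+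
  then show ?thesis by (simp add: Wq_def)
qed

lemma supp7: "good t y \<Longrightarrow> 0 < y $ 7 \<Longrightarrow> R7 t = Wq t"
proof -
  assume g: "good t y" and y: "0 < y $ 7"
  have "(Umat e *v x t) $ 5 \<le> (Umat e *v x t) $ 7" "(Umat e *v x t) $ 6 \<le> (Umat e *v x t) $ 7"
    using BR_support[OF good_BR[OF g] y] by auto
  then have "R5 t \<le> R7 t" "R6 t \<le> R7 t" using P_leq P_Rq[of t] by fastforce+
  then show ?thesis by (simp add: Wq_def)
qed


lemma R5der: "good t y \<Longrightarrow> (R5 has_real_derivative exp t * (- y $ 6 + e * y $ 7)) (at t within {0..})"
proof -
  assume g: "good t y"
  have "((\<lambda>t. - z 6 t + e * z 7 t) has_real_derivative - (exp t * y $ 6) + e * (exp t * y $ 7)) (at t within {0..})"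
    by (intro DERIV_add DERIV_minus DERIV_cmult zder[OF g])
  then show ?thesis unfolding R5_def[abs_def] by (simp add: algebra_simps)
qed

lemma R6der: "good t y \<Longrightarrow> (R6 has_real_derivative exp t * (e * y $ 5 - y $ 7)) (at t within {0..})"
proof -
  assume g: "good t y"
  have "((\<lambda>t. e * z 5 t - z 7 t) has_real_derivative e * (exp t * y $ 5) - (exp t * y $ 7)) (at t within {0..})"
    by (intro DERIV_diff DERIV_cmult zder[OF g])
  then show ?thesis unfolding R6_def[abs_def] by (simp add: algebra_simps)
qed

lemma R7der: "good t y \<Longrightarrow> (R7 has_real_derivative exp t * (- y $ 5 + e * y $ 6)) (at t within {0..})"
proof -
  assume g: "good t y"
  have "((\<lambda>t. - z 5 t + e * z 6 t) has_real_derivative - (exp t * y $ 5) + e * (exp t * y $ 6)) (at t within {0..})"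
    by (intro DERIV_add DERIV_minus DERIV_cmult zder[OF g])
  then show ?thesis unfolding R7_def[abs_def] by (simp add: algebra_simps)
qed

lemma Sqder: "good t y \<Longrightarrow> (Sq has_real_derivative exp t * (y $ 5 + y $ 6 + y $ 7)) (at t within {0..})"
proof -
  assume g: "good t y"
  have "((\<lambda>t. z 5 t + z 6 t + z 7 t) has_real_derivative exp t * y $ 5 + exp t * y $ 6 + exp t * y $ 7) (at t within {0..})"
    by (intro DERIV_add zder[OF g])
  then show ?thesis unfolding Sq_def[abs_def] by (simp add: algebra_simps)
qed


lemma R_le_Wq: "R5 t \<le> Wq t" "R6 t \<le> Wq t" "R7 t \<le> Wq t"
  by (auto simp: Wq_def)

lemma y0_5: "good t y \<Longrightarrow> R5 t < Wq t \<Longrightarrow> y $ 5 = 0"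
  using supp5 good_nn[of t y 5] by fastforce
lemma y0_6: "good t y \<Longrightarrow> R6 t < Wq t \<Longrightarrow> y $ 6 = 0"
  using supp6 good_nn[of t y 6] by fastforce
lemma y0_7: "good t y \<Longrightarrow> R7 t < Wq t \<Longrightarrow> y $ 7 = 0"
  using supp7 good_nn[of t y 7] by fastforce

lemma Wq_rdini:
  assumes g: "good t y" and t: "0 \<le> t" and ne: "\<not> (R5 t = R6 t \<and> R6 t = R7 t)"
  shows "rdini Wq t 0"
proof -
  have y: "0 \<le> y $ 5" "0 \<le> y $ 6" "0 \<le> y $ 7" using good_nn[OF g] by auto
  have ep: "0 < exp t" by simp
  show ?thesis
  proof (cases "R5 t = Wq t \<and> R6 t < Wq t")
    case True
    then have "y $ 6 = 0" using y0_6[OF g] by auto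
    then have d: "0 \<le> exp t * (- y $ 6 + e * y $ 7)" using y e0 by simp
    show ?thesis by (rule rd_from[OF R5der[OF g] t d]) (use True R_le_Wq in auto)
  next
    case F1: False
    show ?thesis
    proof (cases "R6 t = Wq t \<and> R7 t < Wq t")
      case True
      then have "y $ 7 = 0" using y0_7[OF g] by auto
      then have d: "0 \<le> exp t * (e * y $ 5 - y $ 7)" using y e0 by simp
      show ?thesis by (rule rd_from[OF R6der[OF g] t d]) (use True R_le_Wq in auto)
    next
      case F2: False
      show ?thesis
      proof (cases "R7 t = Wq t \<and> R5 t < Wq t")
        case True
        then have "y $ 5 = 0" using y0_5[OF g] by auto
        then have d: "0 \<le> exp t * (- y $ 5 + e * y $ 6)" using y e0 by simp
        show ?thesis by (rule rd_from[OF R7der[OF g] t d]) (use True R_le_Wq in auto)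
      next
        case F3: False
        have "R5 t = Wq t \<or> R6 t = Wq t \<or> R7 t = Wq t" by (auto simp: Wq_def max_def)
        then have "R5 t = Wq t \<and> R6 t = Wq t \<and> R7 t = Wq t"
          using F1 F2 F3 R_le_Wq[of t] by (auto simp: less_le)
        then show ?thesis using ne by simp
      qed
    qed
  qed
qed

lemma Q5der: "good t y \<Longrightarrow> ((\<lambda>t. R5 t - (e-1)/3 * Sq t) has_real_derivative
   exp t * (- y $ 6 + e * y $ 7) - (e-1)/3 * (exp t * (y $ 5 + y $ 6 + y $ 7))) (at t within {0..})"
  by (intro DERIV_diff DERIV_cmult R5der Sqder)
lemma Q6der: "good t y \<Longrightarrow> ((\<lambda>t. R6 t - (e-1)/3 * Sq t) has_real_derivative
   exp t * (e * y $ 5 - y $ 7) - (e-1)/3 * (exp t * (y $ 5 + y $ 6 + y $ 7))) (at t within {0..})"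
  by (intro DERIV_diff DERIV_cmult R6der Sqder)
lemma Q7der: "good t y \<Longrightarrow> ((\<lambda>t. R7 t - (e-1)/3 * Sq t) has_real_derivative
   exp t * (- y $ 5 + e * y $ 6) - (e-1)/3 * (exp t * (y $ 5 + y $ 6 + y $ 7))) (at t within {0..})"
  by (intro DERIV_diff DERIV_cmult R7der Sqder)

lemma Ddq_eq: "Ddq t = Wq t - (e-1)/3 * Sq t"
  by (simp add: Ddq_def Wq_def max_def)

lemma Ddq_rdini:
  assumes g: "good t y" and t: "0 \<le> t"
  shows "rdini Ddq t 0"
proof -
  have y: "0 \<le> y $ 5" "0 \<le> y $ 6" "0 \<le> y $ 7" using good_nn[OF g] by auto
  have ep: "0 < exp t" by simp
  define m where "m = (e-1)/3 * (exp t * (y $ 5 + y $ 6 + y $ 7))"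
  have m: "m \<le> 0" unfolding m_def using y e0 e1
    by (intro mult_nonpos_nonneg) auto
  have le: "R5 s - (e-1)/3 * Sq s \<le> Ddq s" "R6 s - (e-1)/3 * Sq s \<le> Ddq s" "R7 s - (e-1)/3 * Sq s \<le> Ddq s" for s
    by (auto simp: Ddq_def)
  have eq1: "R5 t - (e-1)/3 * Sq t = Ddq t" if "R5 t = Wq t" using that by (simp add: Ddq_eq)
  have eq2: "R6 t - (e-1)/3 * Sq t = Ddq t" if "R6 t = Wq t" using that by (simp add: Ddq_eq)
  have eq3: "R7 t - (e-1)/3 * Sq t = Ddq t" if "R7 t = Wq t" using that by (simp add: Ddq_eq)
  note eq = eq1 eq2 eq3
  show ?thesis
  proof (cases "R5 t = Wq t \<and> R6 t < Wq t")
    case True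
    then have "y $ 6 = 0" using y0_6[OF g] by auto
    moreover have "0 \<le> exp t * (e * y $ 7)" using y e0 by simp
    ultimately have d: "0 \<le> exp t * (- y $ 6 + e * y $ 7) - m" using m by simp
    show ?thesis by (rule rd_from[OF Q5der[OF g, folded m_def] t d]) (use True le eq in auto)
  next
    case F1: False
    show ?thesis
    proof (cases "R6 t = Wq t \<and> R7 t < Wq t")
      case True
      then have "y $ 7 = 0" using y0_7[OF g] by auto
      moreover have "0 \<le> exp t * (e * y $ 5)" using y e0 by simp
      ultimately have d: "0 \<le> exp t * (e * y $ 5 - y $ 7) - m" using m by simp
      show ?thesis by (rule rd_from[OF Q6der[OF g, folded m_def] t d]) (use True le eq in auto)
    next
      case F2: False
      show ?thesis
      proof (cases "R7 t = Wq t \<and> R5 t < Wq t")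
        case True
        then have "y $ 5 = 0" using y0_5[OF g] by auto
        moreover have "0 \<le> exp t * (e * y $ 6)" using y e0 by simp
        ultimately have d: "0 \<le> exp t * (- y $ 5 + e * y $ 6) - m" using m by simp
        show ?thesis by (rule rd_from[OF Q7der[OF g, folded m_def] t d]) (use True le eq in auto)
      next
        case F3: False
        have "R5 t = Wq t \<or> R6 t = Wq t \<or> R7 t = Wq t" by (auto simp: Wq_def max_def)
        then have all: "R5 t = Wq t \<and> R6 t = Wq t \<and> R7 t = Wq t"
          using F1 F2 F3 R_le_Wq[of t] by (auto simp: less_le)
        define d1 where "d1 = exp t * (- y $ 6 + e * y $ 7) - m"
        define d2 where "d2 = exp t * (e * y $ 5 - y $ 7) - m"
        define d3 where "d3 = exp t * (- y $ 5 + e * y $ 6) - m"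
        have "d1 + d2 + d3 = 0" unfolding d1_def d2_def d3_def m_def by (simp add: field_simps)
        then have "0 \<le> d1 \<or> 0 \<le> d2 \<or> 0 \<le> d3" by linarith
        then show ?thesis
        proof (elim disjE)
          assume d: "0 \<le> d1"
          show ?thesis by (rule rd_from[OF Q5der[OF g, folded m_def] t d[unfolded d1_def]]) (use all le eq in auto)
        next
          assume d: "0 \<le> d2"
          show ?thesis by (rule rd_from[OF Q6der[OF g, folded m_def] t d[unfolded d2_def]]) (use all le eq in auto)
        next
          assume d: "0 \<le> d3"
          show ?thesis by (rule rd_from[OF Q7der[OF g, folded m_def] t d[unfolded d3_def]]) (use all le eq in auto)
        qed
      qed
    qed
  qed
qed

lemma Ddq_mono: "0 \<le> u \<Longrightarrow> u \<le> v \<Longrightarrow> Ddq u \<le> Ddq v"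
  by (rule mono_tool[OF ACX_Ddq]) (auto intro: Ddq_rdini)

lemma Ddq0: "0 < Ddq 0"
proof (rule ccontr)
  assume "\<not> 0 < Ddq 0"
  then have le: "R5 0 - (e-1)/3 * Sq 0 \<le> 0" "R6 0 - (e-1)/3 * Sq 0 \<le> 0" "R7 0 - (e-1)/3 * Sq 0 \<le> 0"
    by (auto simp: Ddq_def)
  have sum: "R5 0 + R6 0 + R7 0 = (e - 1) * Sq 0" by (simp add: R5_def R6_def R7_def Sq_def algebra_simps)
  have E: "R5 0 = R6 0" "R6 0 = R7 0" using le sum by linarith+
  define a1 where "a1 = x 0 $ 5"
  define a2 where "a2 = x 0 $ 6"
  define a3 where "a3 = x 0 $ 7"
  have E1: "- a2 + e * a3 = e * a1 - a3" using E(1) by (simp add: R5_def R6_def z_def a1_def a2_def a3_def)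
  have E2: "e * a1 - a3 = - a1 + e * a2" using E(2) by (simp add: R6_def R7_def z_def a1_def a2_def a3_def)
  have "(a2 - a1) * (1 + e + e * e) = (1 + e) * (a3 - (1 + e) * a1 + e * a2) - ((1 + e) * a3 - e * a1 - a2)"
    by (simp add: algebra_simps)
  also have "\<dots> = 0" using E1 E2 by (simp add: algebra_simps)
  finally have "(a2 - a1) * (1 + e + e * e) = 0" .
  moreover have "1 + e + e * e > 0" using e0 by (simp add: add_pos_pos)
  ultimately have "a2 = a1" by simp
  moreover then have "a3 = a1" using E2 by (simp add: algebra_simps)
  ultimately show False using n567 by (simp add: a1_def a2_def a3_def)
qed

lemma not_all_eq_q: "0 \<le> t \<Longrightarrow> \<not> (R5 t = R6 t \<and> R6 t = R7 t)"
proof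
  assume t: "0 \<le> t" and E: "R5 t = R6 t \<and> R6 t = R7 t"
  have sum: "R5 t + R6 t + R7 t = (e - 1) * Sq t" by (simp add: R5_def R6_def R7_def Sq_def algebra_simps)
  have "Ddq t = 0" using E sum by (simp add: Ddq_def)
  moreover have "Ddq 0 \<le> Ddq t" using Ddq_mono t by simp
  ultimately show False using Ddq0 by simp
qed

lemma Wq_mono: "0 \<le> u \<Longrightarrow> u \<le> v \<Longrightarrow> Wq u \<le> Wq v"
proof (rule mono_tool[OF ACX_Wq])
  fix t y assume "0 \<le> u" "u < t" "good t y"
  moreover then have "0 \<le> t" by simp
  ultimately show "rdini Wq t 0" using Wq_rdini not_all_eq_q by blast
qed


end

definition Kb :: "real \<Rightarrow> real \<Rightarrow> real \<Rightarrow> real" where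
  "Kb e W0 Wq0 = (1 + 2*e) * max 0 ((- (2 - 7*e) * W0 - e * max 0 (1 - 5*e) * W0 - 3 * e^2 * Wq0)
      / (2 - 9*e + 4*e^2 - e^2 * max 0 (1 - 5*e))) / e"

lemma final_arith:
  fixes e a1 a2 a3 W0 Wq0 :: real
  assumes e0: "0 < e" and e1: "e < 2/9" and nn: "0 \<le> a1" "0 \<le> a2" "0 \<le> a3"
    and F1: "a1 \<le> e * a2 - W0" and F2: "a2 + W0 \<le> e * a3"
    and F3: "(2 - 7*e) * a3 \<le> (1 - 5*e) * a1 + (2 - 4*e) * a2 - 3*e*Wq0"
    and F4: "e * a3 \<le> (1 + e) * a2 - a1"
  shows "a1 + a2 + a3 \<le> Kb e W0 Wq0"
proof -
  define c where "c = max 0 (1 - 5*e)"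
  define C0 where "C0 = - (2 - 7*e) * W0 - e * c * W0 - 3 * e^2 * Wq0"
  define \<gamma> where "\<gamma> = 2 - 9*e + 4*e^2 - e^2 * c"
  have c: "0 \<le> c" "c \<le> 1" "1 - 5*e \<le> c" using e0 by (auto simp: c_def)
  have g: "\<gamma> > 0"
  proof -
    have "9 * e < 2" using e1 by simp
    moreover have "e^2 * c \<le> e^2 * 1" using c by (intro mult_left_mono) auto
    moreover have "0 \<le> e^2" by simp
    ultimately show ?thesis unfolding \<gamma>_def by linarith
  qed
  have c1: "0 \<le> 2 - 7*e" using e1 by auto
  have s1: "(2 - 7*e) * (a2 + W0) \<le> (2 - 7*e) * (e * a3)" using mult_left_mono[OF F2 c1] .
  have s2: "e * ((2 - 7*e) * a3) \<le> e * ((1 - 5*e) * a1 + (2 - 4*e) * a2 - 3*e*Wq0)"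
    using mult_left_mono[OF F3, of e] e0 by simp
  have s3a: "(e * (1 - 5*e)) * a1 \<le> (e * c) * a1"
    using c e0 nn by (intro mult_right_mono) auto
  have s3b: "(e * c) * a1 \<le> (e * c) * (e * a2 - W0)"
    using mult_left_mono[OF F1, of "e * c"] e0 c by simp
  have "\<gamma> * a2 \<le> C0"
    using s1 s2 s3a s3b unfolding \<gamma>_def C0_def by (simp add: algebra_simps power2_eq_square)
  then have a2b: "a2 \<le> C0 / \<gamma>" using g by (simp add: pos_le_divide_eq mult.commute)
  have "e * (a1 + a2 + a3) \<le> (e - 1) * a1 + (1 + 2*e) * a2" using F4 by (simp add: algebra_simps)
  also have "\<dots> \<le> (1 + 2*e) * a2" using nn e1 by (simp add: mult_nonpos_nonneg)
  also have "\<dots> \<le> (1 + 2*e) * max 0 (C0 / \<gamma>)" using a2b e0 by (intro mult_left_mono) auto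
  finally have "e * (a1 + a2 + a3) \<le> (1 + 2*e) * max 0 (C0 / \<gamma>)" .
  then show ?thesis using e0 unfolding Kb_def C0_def \<gamma>_def c_def by (simp add: pos_le_divide_eq mult.commute)
qed

context game begin

lemma znn: "0 \<le> t \<Longrightarrow> 0 \<le> z i t"
  using xnn by (simp add: z_def)

lemma zsum: "0 \<le> t \<Longrightarrow> S t + z 4 t + Sq t = exp t"
proof -
  assume t: "0 \<le> t"
  have "S t + z 4 t + Sq t = exp t * (x t $ 1 + x t $ 2 + x t $ 3 + x t $ 4 + x t $ 5 + x t $ 6 + x t $ 7)"
    by (simp add: S_def Sq_def z_def algebra_simps)
  then show ?thesis using xsum[OF t] by simp
qed

lemma cc_z: "cc t = -10 * z 4 t + (e - 1/3) * Sq t"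
  by (simp add: cc_def z_def Sq_def algebra_simps)
lemma ccq_z: "ccq t = - S t / 3 + 10 * z 4 t"
  by (simp add: ccq_def z_def S_def algebra_simps)

lemma W_le_eS: "0 \<le> t \<Longrightarrow> W t \<le> e * S t"
proof -
  assume t: "0 \<le> t"
  have n: "0 \<le> z 1 t" "0 \<le> z 2 t" "0 \<le> z 3 t" using znn[OF t] by auto
  have "0 \<le> e * z 1 t" "0 \<le> e * z 2 t" "0 \<le> e * z 3 t" using n e0 by auto
  then have "R1 t \<le> e * S t" "R2 t \<le> e * S t" "R3 t \<le> e * S t"
    using n by (auto simp: R1_def R2_def R3_def S_def algebra_simps)
  then show ?thesis by (simp add: W_def)
qed

lemma exp_P:
  "exp t * (Umat e *v x t) $ 4 = 2 * z 3 t - 2 * z 1 t - 2 * z 2 t - Sq t / 3"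
  by (simp add: Ux z_def Sq_def algebra_simps)

lemma HZ:
  assumes t: "0 < t"
  shows "(1/3 - e) * Sq t + 20 * z 4 t \<le> W t - Wq t + S t / 3"
proof -
  obtain i where i: "i \<in> {1,2,3::7}" and imax: "\<forall>j. (Umat e *v x t) $ j \<le> (Umat e *v x t) $ i"
    using HH[OF t] by blast
  have Pi: "exp t * (Umat e *v x t) $ i \<le> W t + cc t"
    using i P_R[of t] R_le_W[of t] by auto
  have "\<exists>j\<in>{5,6,7::7}. exp t * (Umat e *v x t) $ j = Wq t + ccq t"
    using P_Rq[of t] by (auto simp: Wq_def max_def)
  then obtain j where j: "exp t * (Umat e *v x t) $ j = Wq t + ccq t" by blast
  have "exp t * (Umat e *v x t) $ j \<le> exp t * (Umat e *v x t) $ i" using imax by simp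
  then have "Wq t + ccq t \<le> W t + cc t" using j Pi by linarith
  then show ?thesis by (simp add: cc_z ccq_z algebra_simps)
qed

lemma S_lower:
  assumes t: "0 < t"
  shows "(1/3 - e) * exp t + Wq 0 \<le> 2/3 * S t"
proof -
  have t0: "0 \<le> t" using t by simp
  have A: "(1/3 - e) * Sq t + 20 * z 4 t \<le> W t - Wq t + S t / 3" using HZ[OF t] .
  have B: "(1/3 - e) * z 4 t \<le> 20 * z 4 t" using znn[OF t0, of 4] e0 by (intro mult_right_mono) auto
  have C: "Wq 0 \<le> Wq t" using Wq_mono t0 by simp
  have D: "W t \<le> e * S t" using W_le_eS[OF t0] .
  have E: "Sq t + z 4 t = exp t - S t" using zsum[OF t0] by simp
  have "(1/3 - e) * (Sq t + z 4 t) \<le> e * S t - Wq 0 + S t / 3"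
    using A B C D by (simp add: distrib_left)
  then have "(1/3 - e) * (exp t - S t) \<le> e * S t - Wq 0 + S t / 3" using E by simp
  then show ?thesis by (simp add: algebra_simps)
qed

lemma exitc:
  assumes t: "0 < t" and R3W: "R3 t = W t"
  shows "(2 - 7*e) * z 3 t \<le> (1 - 5*e) * z 1 t + (2 - 4*e) * z 2 t - 3*e*Wq 0"
proof -
  have t0: "0 \<le> t" using t by simp
  obtain i where i: "i \<in> {1,2,3::7}" and imax: "\<forall>j. (Umat e *v x t) $ j \<le> (Umat e *v x t) $ i"
    using HH[OF t] by blast
  have "exp t * (Umat e *v x t) $ i \<le> exp t * (Umat e *v x t) $ 3"
    using i P_R[of t] R_le_W[of t] R3W by auto
  moreover have "exp t * (Umat e *v x t) $ 4 \<le> exp t * (Umat e *v x t) $ i" using imax by simp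
  ultimately have "exp t * (Umat e *v x t) $ 4 \<le> exp t * (Umat e *v x t) $ 3" by linarith
  then have X: "2 * z 3 t - z 1 t - (2 + e) * z 2 t + 10 * z 4 t - e * Sq t \<le> 0"
    using exp_P[of t] P_R(3)[of t] by (simp add: R3_def cc_z algebra_simps)
  have A: "(1/3 - e) * Sq t + 20 * z 4 t \<le> W t - Wq t + S t / 3" using HZ[OF t] .
  have C: "Wq 0 \<le> Wq t" using Wq_mono t0 by simp
  have ce: "0 \<le> 1 - 3*e" using e1 by simp
  have X2: "(1 - 3*e) * (2 * z 3 t - z 1 t - (2 + e) * z 2 t + 10 * z 4 t) \<le> (1 - 3*e) * (e * Sq t)"
    using mult_left_mono[OF _ ce, of "2 * z 3 t - z 1 t - (2 + e) * z 2 t + 10 * z 4 t" "e * Sq t"] X by simp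
  have A2: "(3*e) * ((1/3 - e) * Sq t + 20 * z 4 t) \<le> (3*e) * (- z 1 t + e * z 2 t - Wq 0 + S t / 3)"
    using mult_left_mono[OF _, of "(1/3 - e) * Sq t + 20 * z 4 t" "- z 1 t + e * z 2 t - Wq 0 + S t / 3" "3*e"]
      A C R3W e0 by (simp add: R3_def)
  have z4: "0 \<le> (1 - 3*e) * (10 * z 4 t) + (3*e) * (20 * z 4 t)" using znn[OF t0, of 4] ce e0 by simp
  define p1 where "p1 = e * z 1 t"
  define p2 where "p2 = e * z 2 t"
  define p3 where "p3 = e * z 3 t"
  define p4 where "p4 = e * z 4 t"
  define pS where "pS = e * Sq t"
  define q2 where "q2 = e * p2"
  define qS where "qS = e * pS"
  define w where "w = e * Wq 0"
  have E1: "(1 - 3*e) * (2 * z 3 t - z 1 t - (2 + e) * z 2 t + 10 * z 4 t)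
      = 2 * z 3 t - z 1 t - 2 * z 2 t + 5 * p2 + 10 * z 4 t - 6 * p3 + 3 * p1 + 3 * q2 - 30 * p4"
    by (simp add: p1_def p2_def p3_def p4_def q2_def algebra_simps)
  have E2: "(1 - 3*e) * (e * Sq t) = pS - 3 * qS" by (simp add: pS_def qS_def algebra_simps)
  have E3: "(3*e) * ((1/3 - e) * Sq t + 20 * z 4 t) = pS - 3 * qS + 60 * p4"
    by (simp add: pS_def qS_def p4_def algebra_simps)
  have E4: "(3*e) * (- z 1 t + e * z 2 t - Wq 0 + S t / 3) = - 3 * p1 + 3 * q2 - 3 * w + (p1 + p2 + p3)"
    by (simp add: S_def p1_def p2_def p3_def q2_def w_def algebra_simps)
  have E5: "(1 - 3*e) * (10 * z 4 t) + (3*e) * (20 * z 4 t) = 10 * z 4 t + 30 * p4"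
    by (simp add: p4_def algebra_simps)
  have E6: "(2 - 7*e) * z 3 t = 2 * z 3 t - 7 * p3" by (simp add: p3_def algebra_simps)
  have E7: "(1 - 5*e) * z 1 t + (2 - 4*e) * z 2 t - 3*e*Wq 0 = z 1 t - 5 * p1 + 2 * z 2 t - 4 * p2 - 3 * w"
    by (simp add: p1_def p2_def w_def algebra_simps)
  show ?thesis using X2 A2 z4 unfolding E1 E2 E3 E4 E5 E6 E7 by linarith
qed

end

context game begin

lemma cont_on: "ACX f \<Longrightarrow> 0 \<le> p \<Longrightarrow> p \<le> q \<Longrightarrow> continuous_on {p..q} f"
  using ac_cont ACX_ac by blast

lemma last_B:
  assumes a: "0 \<le> a" "a \<le> b" and R: "ACX Rf" and le: "\<And>\<tau>. Rf \<tau> \<le> W \<tau>" and Ra: "Rf a = W a"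
  shows "\<exists>s. a \<le> s \<and> s \<le> b \<and> Rf s = W s \<and> (\<forall>\<tau>. s < \<tau> \<longrightarrow> \<tau> < b \<longrightarrow> Rf \<tau> < W \<tau>)"
proof -
  define B where "B = {\<tau> \<in> {a..b}. W \<tau> \<le> Rf \<tau>}"
  have cl: "closed B" unfolding B_def
    by (rule continuous_on_closed_Collect_le[OF cont_on[OF ACX_W a] cont_on[OF R a] closed_atLeastAtMost])
  have ne: "B \<noteq> {}" using a Ra by (auto simp: B_def)
  have bd: "bdd_above B" by (rule bdd_aboveI[of _ b]) (auto simp: B_def)
  define s where "s = Sup B"
  have sB: "s \<in> B" using closed_contains_Sup[OF ne bd cl] by (simp add: s_def)
  show ?thesis
  proof (intro exI[of _ s] conjI allI impI)
    show "a \<le> s" "s \<le> b" using sB by (auto simp: B_def)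
    show "Rf s = W s" using sB le[of s] by (auto simp: B_def)
    fix \<tau> assume \<tau>: "s < \<tau>" "\<tau> < b"
    have "\<tau> \<notin> B" using \<tau>(1) cSup_upper[OF _ bd] by (force simp: s_def)
    moreover have "\<tau> \<in> {a..b}" using \<tau> sB by (auto simp: B_def)
    ultimately show "Rf \<tau> < W \<tau>" by (auto simp: B_def)
  qed
qed

lemma first_B:
  assumes a: "0 \<le> a" "a \<le> b" and R: "ACX Rf" and le: "\<And>\<tau>. Rf \<tau> \<le> W \<tau>" and Rb: "Rf b = W b"
  shows "\<exists>s. a \<le> s \<and> s \<le> b \<and> Rf s = W s \<and> (\<forall>\<tau>. a < \<tau> \<longrightarrow> \<tau> < s \<longrightarrow> Rf \<tau> < W \<tau>)"
proof -
  define B where "B = {\<tau> \<in> {a..b}. W \<tau> \<le> Rf \<tau>}"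
  have cl: "closed B" unfolding B_def
    by (rule continuous_on_closed_Collect_le[OF cont_on[OF ACX_W a] cont_on[OF R a] closed_atLeastAtMost])
  have ne: "B \<noteq> {}" using a Rb by (auto simp: B_def)
  have bd: "bdd_below B" by (rule bdd_belowI[of _ a]) (auto simp: B_def)
  define s where "s = Inf B"
  have sB: "s \<in> B" using closed_contains_Inf[OF ne bd cl] by (simp add: s_def)
  show ?thesis
  proof (intro exI[of _ s] conjI allI impI)
    show "a \<le> s" "s \<le> b" using sB by (auto simp: B_def)
    show "Rf s = W s" using sB le[of s] by (auto simp: B_def)
    fix \<tau> assume \<tau>: "a < \<tau>" "\<tau> < s"
    have "\<tau> \<notin> B" using \<tau>(2) cInf_lower[OF _ bd] by (force simp: s_def)
    moreover have "\<tau> \<in> {a..b}" using \<tau> sB by (auto simp: B_def)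
    ultimately show "Rf \<tau> < W \<tau>" by (auto simp: B_def)
  qed
qed

lemma grow_bound:
  fixes zf :: "real \<Rightarrow> real"
  assumes T: "0 \<le> T" "T \<le> t" and R: "ACX Rf" and le: "\<And>\<tau>. Rf \<tau> \<le> W \<tau>"
    and zc: "\<And>u v. 0 \<le> u \<Longrightarrow> u \<le> v \<Longrightarrow> (\<And>\<tau>. u < \<tau> \<Longrightarrow> \<tau> < v \<Longrightarrow> Rf \<tau> < W \<tau>) \<Longrightarrow> zf v = zf u"
    and bnd: "\<And>s. T \<le> s \<Longrightarrow> s \<le> t \<Longrightarrow> Rf s = W s \<Longrightarrow> zf s \<le> M"
  shows "zf t \<le> max (zf T) M"
proof (cases "\<exists>\<tau>. T \<le> \<tau> \<and> \<tau> \<le> t \<and> Rf \<tau> = W \<tau>")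
  case True
  then obtain \<tau> where \<tau>: "T \<le> \<tau>" "\<tau> \<le> t" "Rf \<tau> = W \<tau>" by blast
  obtain s where s: "\<tau> \<le> s" "s \<le> t" "Rf s = W s" "\<forall>r. s < r \<longrightarrow> r < t \<longrightarrow> Rf r < W r"
    using last_B[OF _ \<tau>(2) R le \<tau>(3)] \<tau>(1) T by auto
  have "zf t = zf s" using zc[of s t] s \<tau> T by auto
  moreover have "zf s \<le> M" using bnd s \<tau> by auto
  ultimately show ?thesis by (metis max.coboundedI2)
next
  case False
  then have "\<And>r. T < r \<Longrightarrow> r < t \<Longrightarrow> Rf r < W r" using le by (meson less_le less_imp_le)
  then have "zf t = zf T" using zc[OF T] by blast
  then show ?thesis by simp
qed

lemma S_big: "\<exists>t\<ge>T. 0 < t \<and> C < S t"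
proof -
  define M where "M = (2/3 * C - Wq 0) / (1/3 - e)"
  define t where "t = max T 1 + \<bar>M\<bar>"
  have t: "t \<ge> T" "0 < t" by (auto simp: t_def)
  have "exp t \<ge> 1 + t" by (rule exp_ge_add_one_self)
  moreover have "\<bar>M\<bar> < 1 + t" unfolding t_def by (simp add: max_def)
  moreover have "M \<le> \<bar>M\<bar>" by simp
  ultimately have "exp t > M" by linarith
  then have "(1/3 - e) * exp t > (1/3 - e) * M" using e1 by (intro mult_strict_left_mono) auto
  then have "(1/3 - e) * exp t > 2/3 * C - Wq 0" using e1 by (simp add: M_def)
  then have "C < S t" using S_lower[OF t(2)] by simp
  then show ?thesis using t by blast
qed

lemma S_big2: "\<exists>T0>0. \<forall>t\<ge>T0. C < S t"
proof -
  define M where "M = (2/3 * C - Wq 0) / (1/3 - e)"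
  define T0 where "T0 = 1 + \<bar>M\<bar>"
  have T0: "0 < T0" by (simp add: T0_def)
  show ?thesis
  proof (intro exI[of _ T0] conjI allI impI T0)
    fix t assume t: "T0 \<le> t"
    have "exp t \<ge> 1 + t" by (rule exp_ge_add_one_self)
    moreover have "\<bar>M\<bar> < 1 + t" using t by (simp add: T0_def)
    moreover have "M \<le> \<bar>M\<bar>" by simp
    ultimately have "exp t > M" by linarith
    then have "(1/3 - e) * exp t > (1/3 - e) * M" using e1 by (intro mult_strict_left_mono) auto
    then have "(1/3 - e) * exp t > 2/3 * C - Wq 0" using e1 by (simp add: M_def)
    then show "C < S t" using S_lower[of t] t T0 by simp
  qed
qed

lemma U3: assumes T: "0 \<le> T" shows "\<exists>t\<ge>T. R3 t = W t"
proof (rule ccontr)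
  assume "\<not> (\<exists>t\<ge>T. R3 t = W t)"
  then have lt: "\<And>t. T \<le> t \<Longrightarrow> R3 t < W t" using R_le_W(3) by (meson less_le)
  define C3 where "C3 = z 3 T"
  have z3c: "z 3 t = C3" if "T \<le> t" for t
    using z_const3[OF T that] lt unfolding C3_def by (meson less_imp_le)
  define Z1 where "Z1 = max (z 1 T) ((1 + e) * C3 / e)"
  have z1b: "z 1 t \<le> Z1" if t: "T \<le> t" for t
    unfolding Z1_def
  proof (rule grow_bound[OF T t ACX_R(1) R_le_W(1) z_const1])
    fix s assume s: "T \<le> s" "s \<le> t" "R1 s = W s"
    have "R2 s \<le> R1 s" using s R_le_W(2)[of s] by simp
    then have "e * z 1 s \<le> (1 + e) * z 3 s - z 2 s" by (simp add: R1_def R2_def algebra_simps)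
    moreover have "0 \<le> z 2 s" using znn T s by simp
    ultimately have "e * z 1 s \<le> (1 + e) * C3" using z3c[OF s(1)] by simp
    then show "z 1 s \<le> (1 + e) * C3 / e" using e0 by (simp add: pos_le_divide_eq mult.commute)
  qed
  define Z2 where "Z2 = max (z 2 T) ((1 + e) * Z1 / e)"
  have z2b: "z 2 t \<le> Z2" if t: "T \<le> t" for t
    unfolding Z2_def
  proof (rule grow_bound[OF T t ACX_R(2) R_le_W(2) z_const2])
    fix s assume s: "T \<le> s" "s \<le> t" "R2 s = W s"
    have "R3 s \<le> R2 s" using s R_le_W(3)[of s] by simp
    then have "e * z 2 s \<le> (1 + e) * z 1 s - z 3 s" by (simp add: R2_def R3_def algebra_simps)
    moreover have "0 \<le> z 3 s" using znn T s by simp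
    moreover have "(1 + e) * z 1 s \<le> (1 + e) * Z1" using z1b[OF s(1)] e0 by (intro mult_left_mono) auto
    ultimately have "e * z 2 s \<le> (1 + e) * Z1" by simp
    then show "z 2 s \<le> (1 + e) * Z1 / e" using e0 by (simp add: pos_le_divide_eq mult.commute)
  qed
  obtain t where t: "t \<ge> T" "0 < t" "Z1 + Z2 + C3 < S t" using S_big by blast
  have "S t \<le> Z1 + Z2 + C3" using z1b[OF t(1)] z2b[OF t(1)] z3c[OF t(1)] by (simp add: S_def)
  then show False using t by simp
qed

lemma U1: assumes T: "0 \<le> T" shows "\<exists>t\<ge>T. R1 t = W t"
proof (rule ccontr)
  assume "\<not> (\<exists>t\<ge>T. R1 t = W t)"
  then have lt: "\<And>t. T \<le> t \<Longrightarrow> R1 t < W t" using R_le_W(1) by (meson less_le)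
  define C1 where "C1 = z 1 T"
  have z1c: "z 1 t = C1" if "T \<le> t" for t
    using z_const1[OF T that] lt unfolding C1_def by (meson less_imp_le)
  define Z2 where "Z2 = max (z 2 T) ((1 + e) * C1 / e)"
  have z2b: "z 2 t \<le> Z2" if t: "T \<le> t" for t
    unfolding Z2_def
  proof (rule grow_bound[OF T t ACX_R(2) R_le_W(2) z_const2])
    fix s assume s: "T \<le> s" "s \<le> t" "R2 s = W s"
    have "R3 s \<le> R2 s" using s R_le_W(3)[of s] by simp
    then have "e * z 2 s \<le> (1 + e) * z 1 s - z 3 s" by (simp add: R2_def R3_def algebra_simps)
    moreover have "0 \<le> z 3 s" using znn T s by simp
    ultimately have "e * z 2 s \<le> (1 + e) * C1" using z1c[OF s(1)] by simp
    then show "z 2 s \<le> (1 + e) * C1 / e" using e0 by (simp add: pos_le_divide_eq mult.commute)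
  qed
  define Z3 where "Z3 = max (z 3 T) ((1 + e) * Z2 / e)"
  have z3b: "z 3 t \<le> Z3" if t: "T \<le> t" for t
    unfolding Z3_def
  proof (rule grow_bound[OF T t ACX_R(3) R_le_W(3) z_const3])
    fix s assume s: "T \<le> s" "s \<le> t" "R3 s = W s"
    have "R1 s \<le> R3 s" using s R_le_W(1)[of s] by simp
    then have "e * z 3 s \<le> (1 + e) * z 2 s - z 1 s" by (simp add: R1_def R3_def algebra_simps)
    moreover have "0 \<le> z 1 s" using znn T s by simp
    moreover have "(1 + e) * z 2 s \<le> (1 + e) * Z2" using z2b[OF s(1)] e0 by (intro mult_left_mono) auto
    ultimately have "e * z 3 s \<le> (1 + e) * Z2" by simp
    then show "z 3 s \<le> (1 + e) * Z2 / e" using e0 by (simp add: pos_le_divide_eq mult.commute)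
  qed
  obtain t where t: "t \<ge> T" "0 < t" "C1 + Z2 + Z3 < S t" using S_big by blast
  have "S t \<le> C1 + Z2 + Z3" using z1c[OF t(1)] z2b[OF t(1)] z3b[OF t(1)] by (simp add: S_def)
  then show False using t by simp
qed

lemma contra: False
proof -
  define Kc where "Kc = Kb e (W 0) (Wq 0)"
  obtain T0 where T0: "0 < T0" "\<And>t. T0 \<le> t \<Longrightarrow> Kc < S t" using S_big2 by blast
  obtain s0 where s0: "s0 \<ge> T0" "R3 s0 = W s0" using U3[of T0] T0 by auto
  have s00: "0 \<le> s0" using s0 T0 by simp
  obtain t1 where t1: "t1 \<ge> s0" "R1 t1 = W t1" using U1[OF s00] by auto
  obtain t1' where t1': "s0 \<le> t1'" "t1' \<le> t1" "R1 t1' = W t1'" "\<forall>\<tau>. s0 < \<tau> \<longrightarrow> \<tau> < t1' \<longrightarrow> R1 \<tau> < W \<tau>"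
    using first_B[OF s00 t1(1) ACX_R(1) R_le_W(1) t1(2)] by blast
  obtain s' where s': "s0 \<le> s'" "s' \<le> t1'" "R3 s' = W s'" "\<forall>\<tau>. s' < \<tau> \<longrightarrow> \<tau> < t1' \<longrightarrow> R3 \<tau> < W \<tau>"
    using last_B[OF s00 t1'(1) ACX_R(3) R_le_W(3) s0(2)] by blast
  have s'0: "0 \<le> s'" "0 < s'" using s' s0 T0 by auto
  have z1e: "z 1 t1' = z 1 s0" using z_const1[OF s00 t1'(1)] t1'(4) by blast
  have z3e: "z 3 t1' = z 3 s'" using z_const3[OF s'0(1) s'(2)] s'(4) by blast
  have z1s: "z 1 s' = z 1 t1'" using z_mono[OF s00 s'(1), of 1] z_mono[OF s'0(1) s'(2), of 1] z1e by simp
  have z2s: "z 2 s' \<le> z 2 t1'" using z_mono[OF s'0(1) s'(2)] by simp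
  define a1 where "a1 = z 1 s'"
  define a2 where "a2 = z 2 s'"
  define a3 where "a3 = z 3 s'"
  have nn: "0 \<le> a1" "0 \<le> a2" "0 \<le> a3" using znn[OF s'0(1)] by (auto simp: a1_def a2_def a3_def)
  have W0: "W 0 \<le> W s'" using W_mono[OF _ s'0(1)] by simp
  have F1: "a1 \<le> e * a2 - W 0" using W0 s'(3) by (simp add: R3_def a1_def a2_def)
  have "R3 t1' \<le> R1 t1'" using t1'(3) R_le_W(3)[of t1'] by simp
  then have G: "(1 + e) * z 2 t1' - z 1 t1' \<le> e * z 3 t1'" by (simp add: R1_def R3_def algebra_simps)
  have "(1 + e) * a2 \<le> (1 + e) * z 2 t1'" using z2s e0 by (simp add: a2_def)
  then have F2: "a2 + W 0 \<le> e * a3" using G F1 z1s z3e by (simp add: a1_def a3_def algebra_simps)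
  have F3: "(2 - 7*e) * a3 \<le> (1 - 5*e) * a1 + (2 - 4*e) * a2 - 3*e*Wq 0"
    using exitc[OF s'0(2) s'(3)] by (simp add: a1_def a2_def a3_def)
  have "R1 s' \<le> R3 s'" using s'(3) R_le_W(1)[of s'] by simp
  then have F4: "e * a3 \<le> (1 + e) * a2 - a1" by (simp add: R1_def R3_def a1_def a2_def a3_def algebra_simps)
  have "a1 + a2 + a3 \<le> Kc" unfolding Kc_def by (rule final_arith[OF e0 e1 nn F1 F2 F3 F4])
  moreover have "Kc < S s'" using T0(2) s' s0 by simp
  ultimately show False by (simp add: S_def a1_def a2_def a3_def)
qed

end

theorem lemma8:
  fixes e :: real and x :: "real \<Rightarrow> real^7"
  assumes "0 < e" and "e < 2/9"
    and "BR_solution (Umat e) x"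
    and "\<not> (x 0 $ 1 = x 0 $ 2 \<and> x 0 $ 2 = x 0 $ 3)"
    and "\<not> (x 0 $ 5 = x 0 $ 6 \<and> x 0 $ 6 = x 0 $ 7)"
  shows "\<exists>T>0. \<forall>i\<in>{1,2,3::7}.
           (Umat e *v x T) $ i < Max (range (\<lambda>j. (Umat e *v x T) $ j))"
proof (rule ccontr)
  assume N: "\<not> (\<exists>T>0. \<forall>i\<in>{1,2,3::7}.
           (Umat e *v x T) $ i < Max (range (\<lambda>j. (Umat e *v x T) $ j)))"
  have HH: "\<exists>i\<in>{1,2,3::7}. \<forall>j. (Umat e *v x T) $ j \<le> (Umat e *v x T) $ i" if T: "T > 0" for T
  proof -
    obtain i where i: "i \<in> {1,2,3::7}" "\<not> (Umat e *v x T) $ i < Max (range (\<lambda>j. (Umat e *v x T) $ j))"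
      using N T by blast
    have mx: "(Umat e *v x T) $ j \<le> Max (range (\<lambda>j. (Umat e *v x T) $ j))" for j
      by (rule Max_ge) auto
    have le: "Max (range (\<lambda>j. (Umat e *v x T) $ j)) \<le> (Umat e *v x T) $ i" using i(2) by (simp only: not_less)
    have "\<forall>j. (Umat e *v x T) $ j \<le> (Umat e *v x T) $ i" using mx le order_trans by blast
    then show ?thesis using i(1) by blast
  qed
  interpret game e x
    by (unfold_locales) (use assms HH in auto)
  show False by (rule contra)
qed

end
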